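(* Let $\gamma\in(-1/3,0)$ be a constant and $p=n^{\gamma}$. There exists an integer function $k=k(n,\gamma)$ such that, with high probability, $G=G_{n,p}$ satisfies all of the following: (i) $G$ has an independent set of size $k-1$; (ii) $G$ has no special subgraph of order $k$ that contains at least one edge; (iii) $G$ has no special subgraph of order $k+1$.
   Context: "With high probability" means with probability tending to $1$ as $n\to\infty$. A non-star biclique is a complete bipartite graph $K_{a,b}$ with $a,b\ge2$. An induced subgraph $H$ of $G$ is a special subgraph of order $k$ if for some integer $r\ge 0$, $H$ has exactly $k+r$ vertices and the edge set of $H$ can be partitioned into at most $r$ pairwise edge-disjoint non-star bicliques. *)

theory Defs
  imports Complex_Main
begin

text \<open>Simple graphs on vertex set {..<n}; a graph is given by its edge set,
a set of 2-element subsets of {..<n}.\<close>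

definition all_edges :: "nat \<Rightarrow> nat set set" where
  "all_edges n = {e. \<exists>i j. i < j \<and> j < n \<and> e = {i, j}}"

definition gnp_prob :: "nat \<Rightarrow> real \<Rightarrow> (nat set set \<Rightarrow> bool) \<Rightarrow> real" where
  "gnp_prob n p P =
     (\<Sum>E\<in>Pow (all_edges n). if P E
        then p ^ card E * (1 - p) ^ (card (all_edges n) - card E) else 0)"

definition induced_edges :: "nat set set \<Rightarrow> nat set \<Rightarrow> nat set set" where
  "induced_edges E S = {e \<in> E. e \<subseteq> S}"

definition independent_set :: "nat \<Rightarrow> nat set set \<Rightarrow> nat set \<Rightarrow> bool" where
  "independent_set n E S \<longleftrightarrow> S \<subseteq> {..<n} \<and> induced_edges E S = {}"

definition biclique_edges :: "nat set \<Rightarrow> nat set \<Rightarrow> nat set set" where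
  "biclique_edges A B = {{x, y} | x y. x \<in> A \<and> y \<in> B}"

definition nonstar_biclique :: "nat set \<Rightarrow> nat set \<Rightarrow> bool" where
  "nonstar_biclique A B \<longleftrightarrow> finite A \<and> finite B \<and> A \<inter> B = {} \<and> card A \<ge> 2 \<and> card B \<ge> 2"

definition biclique_partitionable :: "nat set set \<Rightarrow> nat \<Rightarrow> bool" where
  "biclique_partitionable F r \<longleftrightarrow>
     (\<exists>bs :: (nat set \<times> nat set) list.
        length bs \<le> r \<and>
        (\<forall>i < length bs. nonstar_biclique (fst (bs ! i)) (snd (bs ! i))) \<and>
        (\<forall>i < length bs. \<forall>j < length bs. i \<noteq> j \<longrightarrow>
            biclique_edges (fst (bs ! i)) (snd (bs ! i)) \<inter>
            biclique_edges (fst (bs ! j)) (snd (bs ! j)) = {}) \<and>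
        (\<Union>i < length bs. biclique_edges (fst (bs ! i)) (snd (bs ! i))) = F)"

definition special_subgraph :: "nat \<Rightarrow> nat set set \<Rightarrow> nat set \<Rightarrow> int \<Rightarrow> bool" where
  "special_subgraph n E S k \<longleftrightarrow> S \<subseteq> {..<n} \<and>
     (\<exists>r :: nat. int (card S) = k + int r \<and> biclique_partitionable (induced_edges E S) r)"

end

theory Submission
  imports Defs "HOL-Real_Asymp.Real_Asymp" "HOL-Library.FuncSet"
begin

lemma finite_all_edges: "finite (all_edges n)"
proof -
  have "all_edges n \<subseteq> Pow {..<n}" unfolding all_edges_def by auto
  thus ?thesis by (rule finite_subset) auto
qed

definition W :: "nat \<Rightarrow> real \<Rightarrow> nat set set \<Rightarrow> real" where
  "W n p E = p ^ card E * (1 - p) ^ (card (all_edges n) - card E)"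

lemma gnp_prob_alt: "gnp_prob n p P = (\<Sum>E\<in>{E\<in>Pow (all_edges n). P E}. W n p E)"
  unfolding gnp_prob_def W_def
  by (subst sum.inter_filter[symmetric]) (auto simp: finite_all_edges)

lemma sum_pow_one:
  fixes p :: real assumes "finite B"
  shows "(\<Sum>G\<in>Pow B. p ^ card G * (1 - p) ^ (card B - card G)) = 1"
proof -
  have "(\<Prod>x\<in>B. p + (1 - p)) = (\<Sum>X\<in>Pow B. (\<Prod>x\<in>X. p) * (\<Prod>x\<in>B-X. (1-p)))"
    by (rule prod_add[OF assms])
  also have "\<dots> = (\<Sum>G\<in>Pow B. p ^ card G * (1 - p) ^ (card B - card G))"
    by (intro sum.cong refl) (auto simp: card_Diff_subset finite_subset[OF _ assms])
  finally show ?thesis by simp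
qed

lemma prob_pattern:
  assumes D: "D \<subseteq> all_edges n" and F: "F \<subseteq> D"
  shows "gnp_prob n p (\<lambda>E. E \<inter> D = F) = p ^ card F * (1 - p) ^ (card D - card F)"
proof -
  let ?A = "all_edges n"
  have fA: "finite ?A" by (rule finite_all_edges)
  have fD: "finite D" using D fA finite_subset by blast
  have fF: "finite F" using F fD finite_subset by blast
  have fAD: "finite (?A - D)" using fA by auto
  have eq: "{E\<in>Pow ?A. E \<inter> D = F} = (\<lambda>G. F \<union> G) ` Pow (?A - D)"
  proof (intro equalityI subsetI)
    fix E assume "E \<in> {E\<in>Pow ?A. E \<inter> D = F}"
    hence E: "E \<subseteq> ?A" "E \<inter> D = F" by auto
    hence "E = F \<union> (E - D)" "E - D \<in> Pow (?A - D)" by auto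
    thus "E \<in> (\<lambda>G. F \<union> G) ` Pow (?A - D)" by blast
  next
    fix E assume "E \<in> (\<lambda>G. F \<union> G) ` Pow (?A - D)"
    then obtain G where "G \<subseteq> ?A - D" "E = F \<union> G" by auto
    thus "E \<in> {E\<in>Pow ?A. E \<inter> D = F}" using F D by auto
  qed
  have inj: "inj_on (\<lambda>G. F \<union> G) (Pow (?A - D))"
    unfolding inj_on_def using F by blast
  have cardA: "card ?A = card D + card (?A - D)"
    using D fA by (metis card_Diff_subset card_mono add_diff_inverse_nat fD not_less)
  have "gnp_prob n p (\<lambda>E. E \<inter> D = F) = (\<Sum>G\<in>Pow (?A - D). W n p (F \<union> G))"
    unfolding gnp_prob_alt eq by (subst sum.reindex[OF inj]) auto
  also have "\<dots> = (\<Sum>G\<in>Pow (?A - D). (p ^ card F * (1 - p) ^ (card D - card F)) *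
                      (p ^ card G * (1 - p) ^ (card (?A - D) - card G)))"
  proof (intro sum.cong refl)
    fix G assume G: "G \<in> Pow (?A - D)"
    have fG: "finite G" using G fAD finite_subset by blast
    have disj: "F \<inter> G = {}" using G F by auto
    have c1: "card (F \<union> G) = card F + card G" using card_Un_disjoint[OF fF fG disj] .
    have cF: "card F \<le> card D" using card_mono[OF fD F] .
    have cG: "card G \<le> card (?A - D)" using G card_mono[OF fAD] by auto
    have c2: "card ?A - card (F \<union> G) = (card D - card F) + (card (?A - D) - card G)"
      using c1 cF cG cardA by simp
    show "W n p (F \<union> G) = (p ^ card F * (1 - p) ^ (card D - card F)) *
                      (p ^ card G * (1 - p) ^ (card (?A - D) - card G))"
      unfolding W_def c2 by (simp add: c1 power_add algebra_simps)
  qed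
  also have "\<dots> = p ^ card F * (1 - p) ^ (card D - card F)"
    by (simp add: sum_distrib_left[symmetric] sum_pow_one[OF fAD])
  finally show ?thesis .
qed

lemma gnp_prob_True: "gnp_prob n p (\<lambda>E. True) = 1"
  using prob_pattern[of "{}" n "{}" p] by simp

lemma gnp_prob_mono:
  assumes "0 \<le> p" "p \<le> 1" "\<And>E. E \<subseteq> all_edges n \<Longrightarrow> P E \<Longrightarrow> Q E"
  shows "gnp_prob n p P \<le> gnp_prob n p Q"
  unfolding gnp_prob_def using assms
  by (intro sum_mono) (auto intro!: mult_nonneg_nonneg)

lemma gnp_prob_nonneg: assumes "0 \<le> p" "p \<le> 1" shows "0 \<le> gnp_prob n p P"
  unfolding gnp_prob_def using assms by (intro sum_nonneg) auto

lemma gnp_prob_disj: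
  "gnp_prob n p (\<lambda>E. P E \<or> Q E) \<le> gnp_prob n p P + gnp_prob n p Q" if "0 \<le> p" "p \<le> 1"
  unfolding gnp_prob_def sum.distrib[symmetric] using that
  by (intro sum_mono) (auto intro!: mult_nonneg_nonneg)

lemma gnp_prob_compl: "gnp_prob n p (\<lambda>E. \<not> P E) = 1 - gnp_prob n p P"
proof -
  have "gnp_prob n p (\<lambda>E. \<not> P E) + gnp_prob n p P = gnp_prob n p (\<lambda>E. True)"
    unfolding gnp_prob_def sum.distrib[symmetric] by (intro sum.cong) auto
  thus ?thesis using gnp_prob_True[of n p] by simp
qed

definition De :: "nat \<Rightarrow> nat set \<Rightarrow> nat set set" where
  "De n S = {e\<in>all_edges n. e \<subseteq> S}"

lemma De_eq: assumes "S \<subseteq> {..<n}" shows "De n S = {T. T \<subseteq> S \<and> card T = 2}"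
proof (intro equalityI subsetI)
  fix e assume "e \<in> De n S"
  then obtain i j where "i < j" "j < n" "e = {i,j}" "e \<subseteq> S" unfolding De_def all_edges_def by auto
  thus "e \<in> {T. T \<subseteq> S \<and> card T = 2}" by auto
next
  fix T assume "T \<in> {T. T \<subseteq> S \<and> card T = 2}"
  then obtain a b where ab: "a \<noteq> b" "T = {a,b}" "T \<subseteq> S" by (auto simp: card_2_iff)
  hence "a < n" "b < n" using assms by (auto simp: subset_iff)
  have "T \<in> all_edges n"
  proof (cases "a < b")
    case True thus ?thesis using ab \<open>b < n\<close> unfolding all_edges_def by blast
  next
    case False hence "b < a" using ab by auto
    thus ?thesis using ab \<open>a < n\<close> unfolding all_edges_def by (auto simp: insert_commute)
  qed
  thus "T \<in> De n S" unfolding De_def using ab by auto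
qed

lemma card_De: assumes "S \<subseteq> {..<n}" shows "card (De n S) = card S choose 2"
  using De_eq[OF assms] n_subsets[of S 2] finite_subset[OF assms] by auto

lemma De_sub: "De n S \<subseteq> all_edges n" unfolding De_def by auto
lemma De_Int: "De n S \<inter> De n T = De n (S \<inter> T)" unfolding De_def by auto
lemma finite_De: "finite (De n S)" using De_sub finite_all_edges finite_subset by blast

lemma induced_De: "E \<subseteq> all_edges n \<Longrightarrow> induced_edges E S = E \<inter> De n S"
  unfolding induced_edges_def De_def by auto

lemma gnp_prob_cong: "(\<And>E. E \<subseteq> all_edges n \<Longrightarrow> P E = Q E) \<Longrightarrow> gnp_prob n p P = gnp_prob n p Q"
  unfolding gnp_prob_def by (intro sum.cong) auto

lemma prob_indep: assumes "S \<subseteq> {..<n}"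
  shows "gnp_prob n p (\<lambda>E. E \<inter> De n S = {}) = (1 - p) ^ (card S choose 2)"
  using prob_pattern[OF De_sub, of "{}" n S p] card_De[OF assms] by simp

lemma gnp_prob_ind: "gnp_prob n p P = (\<Sum>E\<in>Pow (all_edges n). W n p E * (if P E then 1 else 0))"
  unfolding gnp_prob_def W_def by (intro sum.cong) auto

lemma second_moment:
  fixes K :: "nat set set" and p :: real
  assumes p: "0 \<le> p" "p < 1" and fK: "finite K" and K0: "K \<noteq> {}"
    and Ksub: "\<And>S. S \<in> K \<Longrightarrow> S \<subseteq> {..<n} \<and> card S = s"
  shows "gnp_prob n p (\<lambda>E. \<forall>S\<in>K. E \<inter> De n S \<noteq> {}) \<le>
     (\<Sum>S\<in>K. \<Sum>T\<in>K. (1 - p) ^ card (De n S \<union> De n T)) / (card K * (1 - p) ^ (s choose 2))\<^sup>2 - 1"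
proof -
  let ?A = "Pow (all_edges n)"
  define w where "w = W n p"
  define I where "I = (\<lambda>E S. if E \<inter> De n S = {} then (1::real) else 0)"
  define X where "X = (\<lambda>E. \<Sum>S\<in>K. I E S)"
  define \<mu> where "\<mu> = card K * (1 - p) ^ (s choose 2)"
  define Q where "Q = (\<Sum>S\<in>K. \<Sum>T\<in>K. (1 - p) ^ card (De n S \<union> De n T))"
  have w0: "w E \<ge> 0" for E using p unfolding w_def W_def by auto
  have mu0: "\<mu> > 0" unfolding \<mu>_def using p fK K0 by (auto simp: card_gt_0_iff)
  have sumw: "(\<Sum>E\<in>?A. w E) = 1" using gnp_prob_ind[of n p "\<lambda>_. True"] gnp_prob_True
    unfolding w_def by simp
  have sumX: "(\<Sum>E\<in>?A. w E * X E) = \<mu>"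
  proof -
    have "(\<Sum>E\<in>?A. w E * X E) = (\<Sum>S\<in>K. \<Sum>E\<in>?A. w E * I E S)"
      unfolding X_def sum_distrib_left by (rule sum.swap)
    also have "\<dots> = (\<Sum>S\<in>K. (1 - p) ^ (s choose 2))"
    proof (intro sum.cong refl)
      fix S assume S: "S \<in> K"
      have "(\<Sum>E\<in>?A. w E * I E S) = gnp_prob n p (\<lambda>E. E \<inter> De n S = {})"
        unfolding gnp_prob_ind w_def I_def by simp
      also have "\<dots> = (1 - p) ^ (s choose 2)" using prob_indep[of S n p] Ksub[OF S] by simp
      finally show "(\<Sum>E\<in>?A. w E * I E S) = (1 - p) ^ (s choose 2)" .
    qed
    finally show ?thesis unfolding \<mu>_def by simp
  qed
  have sumX2: "(\<Sum>E\<in>?A. w E * (X E)\<^sup>2) = Q"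
  proof -
    have "(\<Sum>E\<in>?A. w E * (X E)\<^sup>2) = (\<Sum>E\<in>?A. \<Sum>S\<in>K. \<Sum>T\<in>K. w E * (I E S * I E T))"
      unfolding X_def power2_eq_square sum_product by (simp add: sum_distrib_left)
    also have "\<dots> = (\<Sum>S\<in>K. \<Sum>T\<in>K. \<Sum>E\<in>?A. w E * (I E S * I E T))"
      by (subst sum.swap) (simp add: sum.swap[of _ ?A])
    also have "\<dots> = Q" unfolding Q_def
    proof (intro sum.cong refl)
      fix S T assume S: "S \<in> K" and T: "T \<in> K"
      have "(\<Sum>E\<in>?A. w E * (I E S * I E T)) = gnp_prob n p (\<lambda>E. E \<inter> (De n S \<union> De n T) = {})"
        unfolding gnp_prob_ind w_def I_def by (intro sum.cong) auto
      also have "\<dots> = (1 - p) ^ card (De n S \<union> De n T)"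
        using prob_pattern[of "De n S \<union> De n T" n "{}" p] De_sub by simp
      finally show "(\<Sum>E\<in>?A. w E * (I E S * I E T)) = (1 - p) ^ card (De n S \<union> De n T)" .
    qed
    finally show ?thesis .
  qed
  have "gnp_prob n p (\<lambda>E. \<forall>S\<in>K. E \<inter> De n S \<noteq> {}) = (\<Sum>E\<in>?A. w E * (if X E = 0 then 1 else 0))"
    unfolding gnp_prob_ind w_def
  proof (intro sum.cong refl)
    fix E
    have "X E = 0 \<longleftrightarrow> (\<forall>S\<in>K. I E S = 0)" unfolding X_def
      using fK by (subst sum_nonneg_eq_0_iff) (auto simp: I_def)
    also have "\<dots> \<longleftrightarrow> (\<forall>S\<in>K. E \<inter> De n S \<noteq> {})" by (auto simp: I_def)
    finally show "W n p E * (if \<forall>S\<in>K. E \<inter> De n S \<noteq> {} then 1 else 0) =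
         W n p E * (if X E = 0 then 1 else 0)" by simp
  qed
  also have "\<dots> \<le> (\<Sum>E\<in>?A. w E * ((X E - \<mu>)\<^sup>2 / \<mu>\<^sup>2))"
  proof (intro sum_mono mult_left_mono w0)
    fix E
    have X0: "X E \<ge> 0" unfolding X_def I_def by (auto intro: sum_nonneg)
    show "(if X E = 0 then 1 else 0) \<le> (X E - \<mu>)\<^sup>2 / \<mu>\<^sup>2" using mu0 by auto
  qed
  also have "\<dots> = ((\<Sum>E\<in>?A. w E * (X E)\<^sup>2) - 2 * \<mu> * (\<Sum>E\<in>?A. w E * X E) + \<mu>\<^sup>2 * (\<Sum>E\<in>?A. w E)) / \<mu>\<^sup>2"
    by (simp add: sum_divide_distrib sum_distrib_left sum_subtractf sum.distrib power2_diff
        algebra_simps diff_divide_distrib add_divide_distrib)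
  also have "\<dots> = Q / \<mu>\<^sup>2 - 1" unfolding sumX sumX2 sumw using mu0
    by (simp add: field_simps power2_eq_square)
  finally show ?thesis unfolding Q_def \<mu>_def .
qed

definition Ks :: "nat \<Rightarrow> nat \<Rightarrow> nat set set" where
  "Ks n s = {S. S \<subseteq> {..<n} \<and> card S = s}"

lemma Ks_card: "card (Ks n s) = n choose s"
  unfolding Ks_def using n_subsets[of "{..<n}" s] by simp

lemma Ks_finite: "finite (Ks n s)"
  unfolding Ks_def by (rule finite_subset[of _ "Pow {..<n}"]) auto

lemma count_overlap:
  assumes S: "S \<subseteq> {..<n}" "card S = s"
  shows "card {T\<in>Ks n s. card (S \<inter> T) = i} \<le> (s choose i) * ((n - s) choose (s - i))"
proof -
  let ?P = "{A. A \<subseteq> S \<and> card A = i} \<times> {B. B \<subseteq> {..<n} - S \<and> card B = s - i}"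
  have fS: "finite S" using S finite_subset by blast
  have inj: "inj_on (\<lambda>T. (S \<inter> T, T - S)) {T\<in>Ks n s. card (S \<inter> T) = i}"
    unfolding inj_on_def Ks_def by auto
  have img: "(\<lambda>T. (S \<inter> T, T - S)) ` {T\<in>Ks n s. card (S \<inter> T) = i} \<subseteq> ?P"
  proof
    fix x assume "x \<in> (\<lambda>T. (S \<inter> T, T - S)) ` {T\<in>Ks n s. card (S \<inter> T) = i}"
    then obtain T where T: "T \<subseteq> {..<n}" "card T = s" "card (S \<inter> T) = i" "x = (S \<inter> T, T - S)"
      unfolding Ks_def by auto
    have fT: "finite T" using T finite_subset by blast
    have "card (T - S) = card T - card (T \<inter> S)" using fT by (simp add: card_Diff_subset_Int)
    hence "card (T - S) = s - i" using T by (simp add: Int_commute)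
    thus "x \<in> ?P" using T by auto
  qed
  have fP: "finite ?P" using fS by (auto intro!: finite_cartesian_product)
  have "card {T\<in>Ks n s. card (S \<inter> T) = i} \<le> card ?P"
    using card_inj_on_le[OF inj img fP] .
  also have "card ?P = (s choose i) * ((n - s) choose (s - i))"
  proof -
    have "card ({..<n} - S) = n - s" using S fS by (simp add: card_Diff_subset)
    thus ?thesis using n_subsets[OF fS, of i] n_subsets[of "{..<n} - S" "s - i"] S
      by (simp add: card_cartesian_product)
  qed
  finally show ?thesis .
qed

lemma card_De_Un:
  assumes "S \<subseteq> {..<n}" "T \<subseteq> {..<n}" "card S = s" "card T = s"
  shows "card (De n S \<union> De n T) + (card (S \<inter> T) choose 2) = 2 * (s choose 2)"
proof -
  have "card (De n S) + card (De n T) = card (De n S \<union> De n T) + card (De n S \<inter> De n T)"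
    by (rule card_Un_Int) (auto simp: finite_De)
  moreover have "S \<inter> T \<subseteq> {..<n}" using assms by auto
  ultimately show ?thesis using card_De[of S n] card_De[of T n] card_De[of "S \<inter> T" n] assms De_Int
    by auto
qed

definition wt :: "real \<Rightarrow> nat \<Rightarrow> real" where
  "wt p i = 1 / (1 - p) ^ (i choose 2)"

lemma no_indep_bound:
  fixes p :: real
  assumes p: "0 \<le> p" "p < 1" and sn: "s \<le> n"
  shows "gnp_prob n p (\<lambda>E. \<forall>S\<in>Ks n s. E \<inter> De n S \<noteq> {}) \<le>
     (\<Sum>i\<in>{2..s}. real (s choose i) * real ((n - s) choose (s - i)) / real (n choose s) * wt p i)"
proof -
  let ?K = "Ks n s"
  let ?c = "(1 - p) ^ (s choose 2)"
  have K0: "?K \<noteq> {}" using Ks_card[of n s] sn by (metis card.empty zero_less_binomial_iff less_numeral_extra(3))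
  have cK: "card ?K = n choose s" by (rule Ks_card)
  have c0: "?c > 0" using p by auto
  have Kpos: "real (n choose s) > 0" using sn by simp
  have wt1: "wt p i \<ge> 1" for i using p unfolding wt_def
    by (simp add: power_le_one)
  have key: "(1 - p) ^ card (De n S \<union> De n T) = ?c\<^sup>2 * wt p (card (S \<inter> T))"
    if "S \<in> ?K" "T \<in> ?K" for S T
  proof -
    have e: "card (De n S \<union> De n T) + (card (S \<inter> T) choose 2) = 2 * (s choose 2)"
      using card_De_Un[of S n T s] that unfolding Ks_def by auto
    have "(1 - p) ^ card (De n S \<union> De n T) * (1 - p) ^ (card (S \<inter> T) choose 2) = ?c\<^sup>2"
      using e by (metis power_add power_mult mult.commute power2_eq_square)
    thus ?thesis unfolding wt_def using p by (simp add: field_simps)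
  qed
  have main: "(\<Sum>T\<in>?K. (wt p (card (S \<inter> T)) - 1)) \<le>
      (\<Sum>i\<in>{2..s}. real (s choose i) * real ((n - s) choose (s - i)) * wt p i)"
    if S: "S \<in> ?K" for S
  proof -
    have Sn: "S \<subseteq> {..<n}" "card S = s" using S unfolding Ks_def by auto
    have "(\<Sum>T\<in>?K. (wt p (card (S \<inter> T)) - 1)) =
          (\<Sum>i\<in>{..s}. \<Sum>T\<in>{T\<in>?K. card (S \<inter> T) = i}. (wt p (card (S \<inter> T)) - 1))"
    proof (rule sum.group[symmetric])
      show "finite ?K" by (rule Ks_finite)
      show "(\<lambda>T. card (S \<inter> T)) ` ?K \<subseteq> {..s}"
        using Sn by (auto intro!: card_mono finite_subset[of _ "{..<n}"] simp flip: Sn(2))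
    qed simp
    also have "\<dots> = (\<Sum>i\<in>{..s}. real (card {T\<in>?K. card (S \<inter> T) = i}) * (wt p i - 1))"
      by (intro sum.cong refl) simp
    also have "\<dots> \<le> (\<Sum>i\<in>{..s}. (if 2 \<le> i then real (s choose i) * real ((n - s) choose (s - i)) * wt p i else 0))"
    proof (intro sum_mono)
      fix i assume "i \<in> {..s}"
      show "real (card {T\<in>?K. card (S \<inter> T) = i}) * (wt p i - 1) \<le>
         (if 2 \<le> i then real (s choose i) * real ((n - s) choose (s - i)) * wt p i else 0)"
      proof (cases "2 \<le> i")
        case True
        have "real (card {T\<in>?K. card (S \<inter> T) = i}) * (wt p i - 1) \<le>
              real ((s choose i) * ((n - s) choose (s - i))) * (wt p i - 1)"
          using count_overlap[OF Sn, of i] wt1[of i] by (intro mult_right_mono) (auto simp flip: of_nat_mult)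
        also have "\<dots> \<le> real (s choose i) * real ((n - s) choose (s - i)) * wt p i"
          unfolding of_nat_mult by (intro mult_left_mono) auto
        finally show ?thesis using True by simp
      next
        case False hence c: "i choose 2 = 0" by simp
        have "wt p i = 1" unfolding wt_def c by simp
        thus ?thesis using False by simp
      qed
    qed
    also have "\<dots> = (\<Sum>i\<in>{2..s}. real (s choose i) * real ((n - s) choose (s - i)) * wt p i)"
      by (subst sum.inter_filter[symmetric]) (auto intro!: sum.cong)
    finally show ?thesis .
  qed
  have "gnp_prob n p (\<lambda>E. \<forall>S\<in>?K. E \<inter> De n S \<noteq> {}) \<le>
     (\<Sum>S\<in>?K. \<Sum>T\<in>?K. (1 - p) ^ card (De n S \<union> De n T)) / (card ?K * ?c)\<^sup>2 - 1"
    by (rule second_moment[OF p Ks_finite K0]) (auto simp: Ks_def)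
  also have "(\<Sum>S\<in>?K. \<Sum>T\<in>?K. (1 - p) ^ card (De n S \<union> De n T)) =
      ?c\<^sup>2 * (\<Sum>S\<in>?K. \<Sum>T\<in>?K. wt p (card (S \<inter> T)))"
    by (simp add: key sum_distrib_left)
  also have "?c\<^sup>2 * (\<Sum>S\<in>?K. \<Sum>T\<in>?K. wt p (card (S \<inter> T))) / (card ?K * ?c)\<^sup>2 - 1 =
      (\<Sum>S\<in>?K. \<Sum>T\<in>?K. (wt p (card (S \<inter> T)) - 1)) / (card ?K)\<^sup>2"
    using c0 K0 Ks_finite[of n s] p by (simp add: sum_subtractf field_simps power2_eq_square card_gt_0_iff)
  also have "\<dots> \<le> (\<Sum>S\<in>?K. (\<Sum>i\<in>{2..s}. real (s choose i) * real ((n - s) choose (s - i)) * wt p i)) / (card ?K)\<^sup>2"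
    by (intro divide_right_mono sum_mono main) auto
  also have "\<dots> = (\<Sum>i\<in>{2..s}. real (s choose i) * real ((n - s) choose (s - i)) * wt p i) / real (n choose s)"
    unfolding cK using Kpos by (simp add: power2_eq_square cK)
  also have "\<dots> = (\<Sum>i\<in>{2..s}. real (s choose i) * real ((n - s) choose (s - i)) / real (n choose s) * wt p i)"
    by (simp add: sum_divide_distrib)
  finally show ?thesis .
qed

lemma union_bound:
  assumes "finite X" "0 \<le> p" "p \<le> 1"
  shows "gnp_prob n p (\<lambda>E. \<exists>x\<in>X. Q x E) \<le> (\<Sum>x\<in>X. gnp_prob n p (Q x))"
  using assms(1)
proof (induction X rule: finite_induct)
  case empty thus ?case using gnp_prob_compl[of n p "\<lambda>_. True"] gnp_prob_True by simp
next
  case (insert x X)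
  have "gnp_prob n p (\<lambda>E. \<exists>y\<in>insert x X. Q y E) = gnp_prob n p (\<lambda>E. Q x E \<or> (\<exists>y\<in>X. Q y E))"
    by (intro gnp_prob_cong) auto
  also have "\<dots> \<le> gnp_prob n p (Q x) + gnp_prob n p (\<lambda>E. \<exists>y\<in>X. Q y E)"
    by (rule gnp_prob_disj[OF assms(2,3)])
  also have "\<dots> \<le> gnp_prob n p (Q x) + (\<Sum>y\<in>X. gnp_prob n p (Q y))" using insert by simp
  finally show ?case using insert by simp
qed

lemma card_biclique:
  assumes "finite A" "finite B" "A \<inter> B = {}"
  shows "card (biclique_edges A B) = card A * card B"
proof -
  have eq: "biclique_edges A B = (\<lambda>(x,y). {x,y}) ` (A \<times> B)"
    unfolding biclique_edges_def by auto
  have "inj_on (\<lambda>(x,y). {x,y}) (A \<times> B)"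
    unfolding inj_on_def using assms(3) by (auto simp: doubleton_eq_iff)
  thus ?thesis unfolding eq using assms by (simp add: card_image card_cartesian_product)
qed

lemma finite_biclique: "finite A \<Longrightarrow> finite B \<Longrightarrow> finite (biclique_edges A B)"
  unfolding biclique_edges_def
  by (rule finite_subset[of _ "(\<lambda>(x,y). {x,y}) ` (A \<times> B)"]) auto

lemma edge_in_all: assumes "x \<noteq> y" "x < n" "y < n" shows "{x,y} \<in> all_edges n"
proof (cases "x < y")
  case True thus ?thesis using assms unfolding all_edges_def by blast
next
  case False hence "y < x" using assms by auto
  thus ?thesis using assms unfolding all_edges_def by (auto simp: insert_commute)
qed

definition Pairs :: "nat set \<Rightarrow> (nat set \<times> nat set) set" where
  "Pairs S = {(A,B). A \<subseteq> S \<and> B \<subseteq> S \<and> nonstar_biclique A B}"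

lemma finite_Pairs: "finite S \<Longrightarrow> finite (Pairs S)"
  unfolding Pairs_def by (rule finite_subset[of _ "Pow S \<times> Pow S"]) auto

definition UU :: "nat \<Rightarrow> (nat \<Rightarrow> nat set \<times> nat set) \<Rightarrow> nat set set" where
  "UU j g = (\<Union>i<j. biclique_edges (fst (g i)) (snd (g i)))"

definition valid :: "nat \<Rightarrow> (nat \<Rightarrow> nat set \<times> nat set) \<Rightarrow> bool" where
  "valid j g \<longleftrightarrow> (\<forall>i<j. \<forall>i'<j. i \<noteq> i' \<longrightarrow>
      biclique_edges (fst (g i)) (snd (g i)) \<inter> biclique_edges (fst (g i')) (snd (g i')) = {})"

lemma partitionable_witness:
  assumes E: "E \<subseteq> all_edges n" and S: "S \<subseteq> {..<n}"
    and bp: "biclique_partitionable (induced_edges E S) r"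
  shows "\<exists>jg\<in>Sigma {..r} (\<lambda>j. PiE {..<j} (\<lambda>_. Pairs S)).
           valid (fst jg) (snd jg) \<and> E \<inter> De n S = UU (fst jg) (snd jg)"
proof -
  obtain bs where bs: "length bs \<le> r"
    "\<forall>i<length bs. nonstar_biclique (fst (bs ! i)) (snd (bs ! i))"
    "\<forall>i<length bs. \<forall>j<length bs. i \<noteq> j \<longrightarrow>
        biclique_edges (fst (bs ! i)) (snd (bs ! i)) \<inter> biclique_edges (fst (bs ! j)) (snd (bs ! j)) = {}"
    "(\<Union>i<length bs. biclique_edges (fst (bs ! i)) (snd (bs ! i))) = induced_edges E S"
    using bp unfolding biclique_partitionable_def by blast
  define j where "j = length bs"
  define g where "g = restrict (\<lambda>i. bs ! i) {..<j}"
  have U: "UU j g = E \<inter> De n S"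
    unfolding UU_def g_def j_def using bs(4) induced_De[OF E] by simp
  have "g i \<in> Pairs S" if i: "i < j" for i
  proof -
    obtain A B where AB: "bs ! i = (A,B)" by fastforce
    have ns: "nonstar_biclique A B" using bs(2) i AB unfolding j_def by force
    hence "A \<noteq> {}" "B \<noteq> {}" unfolding nonstar_biclique_def by auto
    have sub: "biclique_edges A B \<subseteq> De n S" using U i AB unfolding UU_def g_def by force
    have "A \<subseteq> S"
    proof
      fix x assume x: "x \<in> A"
      obtain y where y: "y \<in> B" using \<open>B \<noteq> {}\<close> by auto
      have "{x,y} \<in> biclique_edges A B" unfolding biclique_edges_def using x y by auto
      thus "x \<in> S" using sub unfolding De_def by auto
    qed
    moreover have "B \<subseteq> S"
    proof
      fix y assume y: "y \<in> B"
      obtain x where x: "x \<in> A" using \<open>A \<noteq> {}\<close> by auto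
      have "{x,y} \<in> biclique_edges A B" unfolding biclique_edges_def using x y by auto
      thus "y \<in> S" using sub unfolding De_def by auto
    qed
    ultimately show ?thesis using ns AB i unfolding Pairs_def g_def by auto
  qed
  hence "g \<in> PiE {..<j} (\<lambda>_. Pairs S)" unfolding g_def by auto
  moreover have "valid j g" unfolding valid_def g_def j_def using bs(3) by auto
  moreover have "j \<le> r" using bs(1) j_def by simp
  ultimately have "(j,g) \<in> Sigma {..r} (\<lambda>j. PiE {..<j} (\<lambda>_. Pairs S))" by auto
  thus ?thesis using U \<open>valid j g\<close> by (intro bexI[of _ "(j,g)"]) auto
qed

lemma prob_valid:
  fixes p :: real
  assumes p: "0 \<le> p" "p < 1" and S: "S \<subseteq> {..<n}" "card S = m"
    and g: "g \<in> PiE {..<j} (\<lambda>_. Pairs S)"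
  shows "gnp_prob n p (\<lambda>E. valid j g \<and> E \<inter> De n S = UU j g) \<le>
    (1 - p) ^ (m choose 2) * (\<Prod>i<j. (p / (1 - p)) ^ (card (fst (g i)) * card (snd (g i))))"
proof (cases "valid j g")
  case False
  have "gnp_prob n p (\<lambda>E. valid j g \<and> E \<inter> De n S = UU j g) = gnp_prob n p (\<lambda>E. \<not> True)"
    using False by (intro gnp_prob_cong) auto
  also have "\<dots> = 0" using gnp_prob_compl[of n p "\<lambda>_. True"] gnp_prob_True by simp
  finally show ?thesis using p by (auto intro!: mult_nonneg_nonneg prod_nonneg)
next
  case True
  have fS: "finite S" using S finite_subset by blast
  have gi: "g i \<in> Pairs S" if "i < j" for i using g that by auto
  have fin: "finite (fst (g i))" "finite (snd (g i))" "fst (g i) \<inter> snd (g i) = {}" if "i < j" for i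
    using gi[OF that] fS finite_subset unfolding Pairs_def nonstar_biclique_def by auto
  have sub: "UU j g \<subseteq> De n S"
  proof
    fix e assume "e \<in> UU j g"
    then obtain i x y where i: "i < j" "x \<in> fst (g i)" "y \<in> snd (g i)" "e = {x,y}"
      unfolding UU_def biclique_edges_def by auto
    have xy: "x \<noteq> y" using fin(3)[OF i(1)] i by auto
    have "x \<in> S" "y \<in> S" using gi[OF i(1)] i unfolding Pairs_def by auto
    hence "x < n" "y < n" using S by auto
    hence "e \<in> all_edges n" using i(4) xy edge_in_all by simp
    thus "e \<in> De n S" unfolding De_def using i(4) \<open>x \<in> S\<close> \<open>y \<in> S\<close> by auto
  qed
  have cU: "card (UU j g) = (\<Sum>i<j. card (fst (g i)) * card (snd (g i)))"
    unfolding UU_def using True unfolding valid_def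
    by (subst card_UN_disjoint) (auto simp: finite_biclique fin card_biclique)
  have cD: "card (De n S) = m choose 2" using card_De[OF S(1)] S by simp
  have le: "card (UU j g) \<le> m choose 2" using card_mono[OF finite_De sub] cD by simp
  have "gnp_prob n p (\<lambda>E. valid j g \<and> E \<inter> De n S = UU j g) = gnp_prob n p (\<lambda>E. E \<inter> De n S = UU j g)"
    using True by (intro gnp_prob_cong) auto
  also have "\<dots> = p ^ card (UU j g) * (1 - p) ^ (card (De n S) - card (UU j g))"
    by (rule prob_pattern[OF De_sub sub])
  also have "\<dots> = (1 - p) ^ (m choose 2) * (p / (1 - p)) ^ card (UU j g)"
    using p le unfolding cD by (simp add: power_diff power_divide field_simps)
  also have "(p / (1 - p)) ^ card (UU j g) = (\<Prod>i<j. (p / (1 - p)) ^ (card (fst (g i)) * card (snd (g i))))"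
    unfolding cU by (simp add: power_sum)
  finally show ?thesis by simp
qed

lemma sum_pow_card: assumes "finite S" shows "(\<Sum>A\<in>Pow S. (x::real) ^ card A) = (1 + x) ^ card S"
proof -
  have "(\<Prod>y\<in>S. x + 1) = (\<Sum>X\<in>Pow S. (\<Prod>y\<in>X. x) * (\<Prod>y\<in>S-X. 1))"
    by (rule prod_add[OF assms])
  thus ?thesis by (simp add: add.commute)
qed

lemma G_bound:
  fixes v :: real
  assumes v: "0 < v" "v \<le> 1" and fS: "finite S"
  shows "(\<Sum>x\<in>Pairs S. (v\<^sup>2) ^ (card (fst x) * card (snd x))) \<le> (1 + v^3) ^ (2 * card S) / v ^ 4"
proof -
  have "(\<Sum>x\<in>Pairs S. (v\<^sup>2) ^ (card (fst x) * card (snd x))) \<le>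
        (\<Sum>x\<in>Pairs S. (v^3) ^ card (fst x) * (v^3) ^ card (snd x) / v ^ 4)"
  proof (intro sum_mono)
    fix x assume "x \<in> Pairs S"
    then obtain A B where x: "x = (A,B)" "card A \<ge> 2" "card B \<ge> 2"
      unfolding Pairs_def nonstar_biclique_def by auto
    define a where "a = card A"
    define b where "b = card B"
    have ab: "a \<ge> 2" "b \<ge> 2" using x a_def b_def by auto
    have "(2*a - 3) * (2*b - 3) \<ge> 1" using ab by (simp add: Suc_le_eq)
    hence key: "3*a + 3*b \<le> 2*(a*b) + 4" using ab by (simp add: algebra_simps)
    have "(v\<^sup>2) ^ (a * b) * v ^ 4 = v ^ (2*(a*b) + 4)" by (simp add: power_mult power_add)
    also have "\<dots> \<le> v ^ (3*a + 3*b)" using key v by (intro power_decreasing) auto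
    also have "\<dots> = (v^3) ^ a * (v^3) ^ b" by (simp add: power_mult power_add)
    finally have "(v\<^sup>2) ^ (a * b) \<le> (v^3) ^ a * (v^3) ^ b / v ^ 4" using v by (simp add: field_simps)
    thus "(v\<^sup>2) ^ (card (fst x) * card (snd x)) \<le> (v^3) ^ card (fst x) * (v^3) ^ card (snd x) / v ^ 4"
      using x a_def b_def by simp
  qed
  also have "\<dots> \<le> (\<Sum>x\<in>Pow S \<times> Pow S. (v^3) ^ card (fst x) * (v^3) ^ card (snd x) / v ^ 4)"
    using fS v by (intro sum_mono2) (auto simp: Pairs_def)
  also have "\<dots> = (\<Sum>A\<in>Pow S. (v^3) ^ card A) * (\<Sum>B\<in>Pow S. (v^3) ^ card B) / v ^ 4"
    by (simp add: sum.cartesian_product case_prod_unfold sum_product sum_divide_distrib)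
  also have "\<dots> = (1 + v^3) ^ (2 * card S) / v ^ 4"
    using sum_pow_card[OF fS] by (simp add: power_mult power2_eq_square mult_2 power_add)
  finally show ?thesis .
qed

lemma sum_Sigma_fs:
  assumes "finite A" "\<And>a. a \<in> A \<Longrightarrow> finite (B a)"
  shows "(\<Sum>x\<in>Sigma A B. f x) = (\<Sum>a\<in>A. \<Sum>b\<in>B a. f (a,b))"
  using assms by (subst sum.Sigma) auto

lemma prob_part_S:
  fixes p v :: real
  assumes p: "0 < p" "p < 1" and v: "v = sqrt (p / (1 - p))" "v \<le> 1"
    and S: "S \<subseteq> {..<n}" "card S = m"
  shows "gnp_prob n p (\<lambda>E. biclique_partitionable (induced_edges E S) r) \<le>
     (1 - p) ^ (m choose 2) * (real r + 1) * ((1 + v^3) ^ (2 * m) / v ^ 4) ^ r"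
proof -
  let ?q = "p / (1 - p)"
  let ?X = "Sigma {..r} (\<lambda>j. PiE {..<j} (\<lambda>_. Pairs S))"
  let ?G = "(\<Sum>x\<in>Pairs S. ?q ^ (card (fst x) * card (snd x)))"
  let ?B = "(1 + v^3) ^ (2 * m) / v ^ 4"
  have fS: "finite S" using S finite_subset by blast
  have q: "?q > 0" using p by auto
  have v0: "v > 0" using v q by simp
  have vq: "v\<^sup>2 = ?q" using v q by simp
  have GB: "?G \<le> ?B" using G_bound[OF v0 v(2) fS] vq S by simp
  have G0: "?G \<ge> 0" using q by (auto intro: sum_nonneg)
  have B1: "?B \<ge> 1"
  proof -
    have "v ^ 4 \<le> 1" using v0 v by (simp add: power_le_one)
    moreover have "1 \<le> (1 + v^3) ^ (2 * m)" using v0 by simp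
    ultimately have "v ^ 4 \<le> (1 + v^3) ^ (2 * m)" by linarith
    thus ?thesis using v0 by (simp add: le_divide_eq)
  qed
  have finX: "finite ?X" using finite_Pairs[OF fS]
    by (intro finite_SigmaI) (auto intro!: finite_PiE)
  have "gnp_prob n p (\<lambda>E. biclique_partitionable (induced_edges E S) r) \<le>
        gnp_prob n p (\<lambda>E. \<exists>jg\<in>?X. valid (fst jg) (snd jg) \<and> E \<inter> De n S = UU (fst jg) (snd jg))"
    using p partitionable_witness[OF _ S(1)] by (intro gnp_prob_mono) auto
  also have "\<dots> \<le> (\<Sum>jg\<in>?X. gnp_prob n p (\<lambda>E. valid (fst jg) (snd jg) \<and> E \<inter> De n S = UU (fst jg) (snd jg)))"
    using p by (intro union_bound finX) auto
  also have "\<dots> \<le> (\<Sum>jg\<in>?X. (1 - p) ^ (m choose 2) * (\<Prod>i<fst jg. ?q ^ (card (fst (snd jg i)) * card (snd (snd jg i)))))"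
    using p S by (intro sum_mono prob_valid) auto
  also have "\<dots> = (1 - p) ^ (m choose 2) * (\<Sum>j\<le>r. \<Sum>g\<in>PiE {..<j} (\<lambda>_. Pairs S). (\<Prod>i<j. ?q ^ (card (fst (g i)) * card (snd (g i)))))"
    by (simp add: sum_distrib_left sum_Sigma_fs finite_Pairs fS finite_PiE)
  also have "\<dots> = (1 - p) ^ (m choose 2) * (\<Sum>j\<le>r. ?G ^ j)"
    by (subst prod_sum_PiE[symmetric]) (auto simp: finite_Pairs fS)
  also have "\<dots> \<le> (1 - p) ^ (m choose 2) * (\<Sum>j\<le>r. ?B ^ r)"
  proof (intro mult_left_mono sum_mono)
    fix j assume "j \<in> {..r}"
    have "?G ^ j \<le> ?B ^ j" using G0 GB by (intro power_mono) auto
    also have "\<dots> \<le> ?B ^ r" using B1 \<open>j \<in> {..r}\<close> by (intro power_increasing) auto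
    finally show "?G ^ j \<le> ?B ^ r" .
  qed (use p in auto)
  also have "\<dots> = (1 - p) ^ (m choose 2) * (real r + 1) * ?B ^ r" by simp
  finally show ?thesis .
qed

lemma prob_bad:
  fixes p v :: real and k :: nat
  assumes p: "0 < p" "p < 1" and v: "v = sqrt (p / (1 - p))" "v \<le> 1"
  shows "gnp_prob n p (\<lambda>E. \<exists>S. S \<subseteq> {..<n} \<and> card S \<ge> k + 1 \<and>
           biclique_partitionable (induced_edges E S) (card S - k)) \<le>
     (\<Sum>m\<in>{k+1..n}. real (n choose m) * ((1 - p) ^ (m choose 2) * (real (m - k) + 1) *
         ((1 + v^3) ^ (2 * m) / v ^ 4) ^ (m - k)))"
proof -
  let ?X = "Sigma {k+1..n} (Ks n)"
  have finX: "finite ?X" using Ks_finite by (intro finite_SigmaI) auto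
  have "gnp_prob n p (\<lambda>E. \<exists>S. S \<subseteq> {..<n} \<and> card S \<ge> k + 1 \<and>
           biclique_partitionable (induced_edges E S) (card S - k)) \<le>
        gnp_prob n p (\<lambda>E. \<exists>x\<in>?X. biclique_partitionable (induced_edges E (snd x)) (fst x - k))"
  proof (intro gnp_prob_mono)
    fix E assume "\<exists>S. S \<subseteq> {..<n} \<and> card S \<ge> k + 1 \<and> biclique_partitionable (induced_edges E S) (card S - k)"
    then obtain S where S: "S \<subseteq> {..<n}" "card S \<ge> k + 1" "biclique_partitionable (induced_edges E S) (card S - k)"
      by blast
    have "card S \<le> n" using card_mono[OF _ S(1)] by simp
    hence "(card S, S) \<in> ?X" using S unfolding Ks_def by auto
    thus "\<exists>x\<in>?X. biclique_partitionable (induced_edges E (snd x)) (fst x - k)" using S(3) by force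
  qed (use p in auto)
  also have "\<dots> \<le> (\<Sum>x\<in>?X. gnp_prob n p (\<lambda>E. biclique_partitionable (induced_edges E (snd x)) (fst x - k)))"
    using p by (intro union_bound finX) auto
  also have "\<dots> \<le> (\<Sum>x\<in>?X. (1 - p) ^ (fst x choose 2) * (real (fst x - k) + 1) * ((1 + v^3) ^ (2 * fst x) / v ^ 4) ^ (fst x - k))"
    by (intro sum_mono prob_part_S[OF p v]) (auto simp: Ks_def)
  also have "\<dots> = (\<Sum>m\<in>{k+1..n}. real (n choose m) * ((1 - p) ^ (m choose 2) * (real (m - k) + 1) *
         ((1 + v^3) ^ (2 * m) / v ^ 4) ^ (m - k)))"
    by (simp add: sum_Sigma_fs Ks_finite Ks_card)
  finally show ?thesis .
qed

lemma choose2_real: "real (i choose 2) = real i * (real i - 1) / 2"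
proof (induction i)
  case 0 thus ?case by simp
next
  case (Suc i)
  have "Suc i choose 2 = i + (i choose 2)"
    using binomial_Suc_Suc[of i 1] by (simp add: numeral_2_eq_2)
  thus ?case using Suc by (simp add: field_simps)
qed

lemma geom_le:
  fixes x :: real assumes "0 \<le> x" "x < 1"
  shows "(\<Sum>m\<in>{a..b}. x ^ (m - a)) \<le> 1 / (1 - x)"
proof (cases "a \<le> b")
  case True
  have "(\<Sum>m\<in>{a..b}. x ^ (m - a)) = (\<Sum>u\<in>{0..b-a}. x ^ u)"
    using sum.atLeastAtMost_shift_0[OF True, of "\<lambda>m. x ^ (m - a)"] by (simp add: comp_def)
  also have "\<dots> = (\<Sum>u<Suc (b-a). x ^ u)" by (rule sum.cong) auto
  also have "\<dots> = (1 - x ^ Suc (b - a)) / (1 - x)" using assms by (simp only: sum_gp_strict) auto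
  also have "\<dots> \<le> 1 / (1 - x)" using assms by (intro divide_right_mono) auto
  finally show ?thesis .
next
  case False thus ?thesis using assms by simp
qed

lemma binom_rec: "real (n choose Suc m) * real (Suc m) = real (n choose m) * (real n - real m)"
proof (cases "m \<le> n")
  case True
  have "Suc m * (n choose Suc m) = (n - m) * (n choose m)"
    using binomial_absorption[of m n] binomial_absorb_comp[of n m] by simp
  hence "real (Suc m * (n choose Suc m)) = real ((n - m) * (n choose m))" by simp
  thus ?thesis using True by (simp add: of_nat_diff algebra_simps)
next
  case False thus ?thesis by (simp add: binomial_eq_0)
qed

lemma C_step_up0:
  "real (n choose (k+1+t)) \<le> real (n choose (k+1)) * (real n / real (k+1)) ^ t"
proof (induction t)
  case 0 thus ?case by simp
next
  case (Suc t)
  let ?m = "k+1+t"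
  have "real (n choose Suc ?m) * real (Suc ?m) \<le> real (n choose ?m) * real n"
    unfolding binom_rec by (intro mult_left_mono) auto
  hence "real (n choose Suc ?m) \<le> real (n choose ?m) * real n / real (Suc ?m)"
    by (simp add: field_simps)
  also have "\<dots> \<le> real (n choose ?m) * real n / real (k+1)"
    by (intro divide_left_mono mult_nonneg_nonneg) auto
  also have "\<dots> \<le> real (n choose (k+1)) * (real n / real (k+1)) ^ t * real n / real (k+1)"
    using Suc by (intro divide_right_mono mult_right_mono) auto
  also have "\<dots> = real (n choose (k+1)) * (real n / real (k+1)) ^ Suc t"
    by (simp add: power_Suc field_simps)
  finally show ?case by simp
qed

lemma C_step_up:
  assumes "k + 1 \<le> m"
  shows "real (n choose m) \<le> real (n choose (k+1)) * (real n / real (k+1)) ^ (m - k - 1)"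
  using C_step_up0[of n k "m - k - 1"] assms by simp

lemma choose2_split: "t \<ge> 1 \<Longrightarrow> (k + t) choose 2 = ((k+1) choose 2) + k * (t - 1) + (t choose 2)"
proof -
  assume t: "t \<ge> 1"
  have "real ((k + t) choose 2) = real (((k+1) choose 2) + k * (t - 1) + (t choose 2))"
    using t by (simp add: choose2_real of_nat_diff field_simps)
  thus ?thesis by (simp only: of_nat_eq_iff)
qed

lemma D_bound:
  fixes p :: real
  assumes p: "0 < p" "p < 1" and kn: "k + 1 \<le> n"
    and F: "real (n choose (k+1)) * (1 - p) ^ ((k+1) choose 2) \<le> 1"
  shows "(1 - p) ^ k \<le> ((real k + 1) / real n)\<^sup>2"
proof -
  define x where "x = (real n / real (k + 1))\<^sup>2 * (1 - p) ^ k"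
  have x0: "x \<ge> 0" unfolding x_def using p by auto
  have e: "2 * ((k+1) choose 2) = k * (k+1)"
  proof -
    have "real (2 * ((k+1) choose 2)) = real (k * (k+1))" by (simp add: choose2_real field_simps)
    thus ?thesis by (simp only: of_nat_eq_iff)
  qed
  have "(real n / real (k+1)) ^ (k+1) \<le> real (n choose (k+1))"
    using binomial_ge_n_over_k_pow_k[OF kn] by simp
  hence "(real n / real (k+1)) ^ (k+1) * (1 - p) ^ ((k+1) choose 2) \<le> 1"
    using F p by (meson mult_right_mono order_trans zero_le_power diff_ge_0_iff_ge less_imp_le)
  hence "((real n / real (k+1)) ^ (k+1) * (1 - p) ^ ((k+1) choose 2))\<^sup>2 \<le> 1"
    using p by (simp add: power_le_one)
  also have "((real n / real (k+1)) ^ (k+1) * (1 - p) ^ ((k+1) choose 2))\<^sup>2 = x ^ (k+1)"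
  proof -
    define a where "a = real n / real (k+1)"
    define z where "z = 1 - p"
    have "(a ^ (k+1) * z ^ ((k+1) choose 2))\<^sup>2 = a ^ (2*(k+1)) * z ^ (2*((k+1) choose 2))"
      by (simp only: power_mult_distrib power_mult[symmetric] mult.commute)
    also have "\<dots> = a ^ (2*(k+1)) * z ^ (k * (k+1))" using e by simp
    also have "\<dots> = (a^2) ^ (k+1) * (z^k) ^ (k+1)" by (simp only: power_mult)
    also have "\<dots> = (a^2 * z^k) ^ (k+1)" by (simp add: power_mult_distrib)
    finally show ?thesis unfolding x_def a_def z_def by simp
  qed
  finally have "x ^ (k+1) \<le> 1" .
  hence "x \<le> 1" using power_le_one_iff[OF x0, of "k+1"] by simp
  hence "(real n)\<^sup>2 * (1 - p) ^ k \<le> (real (k+1))\<^sup>2" unfolding x_def using kn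
    by (simp add: power_divide field_simps del: of_nat_add)
  thus ?thesis using kn by (simp add: power_divide field_simps)
qed

lemma exponent_ineq:
  fixes p v :: real
  assumes "0 \<le> p" "p \<le> 1" "0 \<le> v" "4 * v^3 \<le> p" "4 * real k * v^3 \<le> 1" "t \<ge> 1"
  shows "- p * (real t * (real t - 1) / 2) + 2 * real (k + t) * real t * v^3 \<le> real t"
proof -
  have a: "2 * real k * real t * v^3 \<le> real t / 2"
    using mult_right_mono[OF assms(5), of "real t"] by (simp add: algebra_simps)
  have b: "2 * real t * real t * v^3 \<le> p * real t * real t / 2"
    using mult_right_mono[OF assms(4), of "real t * real t"] by (simp add: algebra_simps)
  have c: "p * real t / 2 \<le> real t / 2" using assms by (simp add: mult_right_le_one_le)
  have e: "- p * (real t * (real t - 1) / 2) + 2 * real (k + t) * real t * v^3 =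
     2 * real k * real t * v^3 + 2 * real t * real t * v^3 - p * real t * real t / 2 + p * real t / 2"
    by (simp add: field_simps)
  show ?thesis unfolding e using a b c by linarith
qed

lemma aux_frac: "0 < (a::real) \<Longrightarrow> 0 < n \<Longrightarrow> (n / a) * (a / n)\<^sup>2 = a / n"
  by (simp add: power2_eq_square field_simps)

lemma bad_term:
  fixes p v :: real and k n t :: nat
  assumes p: "0 < p" "p \<le> 1/2" and v: "v = sqrt (p / (1 - p))" and kn: "k + 1 \<le> n"
    and F: "real (n choose (k+1)) * (1 - p) ^ ((k+1) choose 2) \<le> 1"
    and h1: "4 * v^3 \<le> p" and h2: "4 * real k * v^3 \<le> 1"
    and h3: "exp 1 * (real k + 1) / (real n * v^4) \<le> 1/4"
    and t: "t \<ge> 1"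
  shows "real (n choose (k+t)) * ((1 - p) ^ ((k+t) choose 2) * (real t + 1) * ((1 + v^3) ^ (2 * (k+t)) / v ^ 4) ^ t)
     \<le> (real (n choose (k+1)) * (1 - p) ^ ((k+1) choose 2)) * (exp 1 / v^4) * 2 * (1/2) ^ (t - 1)"
proof -
  define z where "z = 1 - p"
  define Fk where "Fk = real (n choose (k+1)) * z ^ ((k+1) choose 2)"
  define \<delta> where "\<delta> = (real k + 1) / real n"
  define \<rho> where "\<rho> = exp 1 * \<delta> / v^4"
  have z: "0 < z" "z < 1" using p unfolding z_def by auto
  have n0: "real n > 0" using kn by simp
  have vpos: "v > 0" using v p by simp
  have Fk0: "Fk \<ge> 0" unfolding Fk_def using z by simp
  have D: "z ^ k \<le> \<delta>\<^sup>2" unfolding z_def \<delta>_def using D_bound[of p k n] p kn F by simp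
  have \<delta>0: "\<delta> \<ge> 0" unfolding \<delta>_def by simp
  have rho: "\<rho> \<le> 1/4" using h3 unfolding \<rho>_def \<delta>_def by (simp add: field_simps)
  have rho0: "\<rho> \<ge> 0" unfolding \<rho>_def using \<delta>0 vpos by simp
  have C1: "real (n choose (k+t)) \<le> real (n choose (k+1)) * (real n / real (k+1)) ^ (t - 1)"
    using C_step_up[of k "k+t" n] t by simp
  have Z1: "z ^ ((k+t) choose 2) = z ^ ((k+1) choose 2) * (z ^ k) ^ (t - 1) * z ^ (t choose 2)"
    using choose2_split[OF t, of k] by (simp add: power_add power_mult)
  have nD: "(real n / real (k+1)) * z ^ k \<le> \<delta>"
  proof -
    have "(real n / real (k+1)) * z ^ k \<le> (real n / real (k+1)) * \<delta>\<^sup>2"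
      using D by (intro mult_left_mono) auto
    also have "\<dots> = \<delta>" unfolding \<delta>_def using n0 aux_frac[of "real k + 1" "real n"] by (simp add: add.commute)
    finally show ?thesis .
  qed
  have A: "real (n choose (k+t)) * z ^ ((k+t) choose 2) \<le> Fk * \<delta> ^ (t - 1) * z ^ (t choose 2)"
  proof -
    have "real (n choose (k+t)) * z ^ ((k+t) choose 2) \<le>
          real (n choose (k+1)) * (real n / real (k+1)) ^ (t - 1) * z ^ ((k+t) choose 2)"
      using C1 z by (intro mult_right_mono) auto
    also have "\<dots> = Fk * ((real n / real (k+1)) ^ (t - 1) * (z ^ k) ^ (t - 1)) * z ^ (t choose 2)"
      unfolding Z1 Fk_def by (simp only: mult.assoc mult.left_commute)
    also have "\<dots> = Fk * ((real n / real (k+1)) * z ^ k) ^ (t - 1) * z ^ (t choose 2)"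
      by (simp only: power_mult_distrib)
    also have "\<dots> \<le> Fk * \<delta> ^ (t - 1) * z ^ (t choose 2)"
      using nD Fk0 z by (intro mult_right_mono mult_left_mono power_mono) auto
    finally show ?thesis .
  qed
  have B: "((1 + v^3) ^ (2 * (k+t)) / v ^ 4) ^ t \<le> exp (2 * real (k+t) * real t * v^3) / (v^4) ^ t"
  proof -
    have "(1 + v^3) ^ (2 * (k+t) * t) \<le> exp (v^3) ^ (2 * (k+t) * t)"
      using vpos by (intro power_mono) (auto simp: add.commute)
    also have "\<dots> = exp (2 * real (k+t) * real t * v^3)"
      by (simp add: exp_of_nat_mult[symmetric] algebra_simps)
    finally have "(1 + v^3) ^ (2 * (k+t) * t) \<le> exp (2 * real (k+t) * real t * v^3)" .
    thus ?thesis using vpos by (simp add: power_divide power_mult[symmetric] divide_right_mono)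
  qed
  have Zt: "z ^ (t choose 2) \<le> exp (- p * (real t * (real t - 1) / 2))"
  proof -
    have "z ^ (t choose 2) \<le> exp (-p) ^ (t choose 2)"
      unfolding z_def using p exp_ge_add_one_self[of "-p"] by (intro power_mono) auto
    also have "\<dots> = exp (- p * (real t * (real t - 1) / 2))"
      by (simp add: exp_of_nat_mult[symmetric] choose2_real algebra_simps)
    finally show ?thesis .
  qed
  have EX: "z ^ (t choose 2) * exp (2 * real (k+t) * real t * v^3) \<le> exp (real t)"
  proof -
    have "z ^ (t choose 2) * exp (2 * real (k+t) * real t * v^3) \<le>
          exp (- p * (real t * (real t - 1) / 2)) * exp (2 * real (k+t) * real t * v^3)"
      using Zt by (intro mult_right_mono) auto
    also have "\<dots> = exp (- p * (real t * (real t - 1) / 2) + 2 * real (k+t) * real t * v^3)"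
      by (simp only: exp_add)
    also have "\<dots> \<le> exp (real t)"
      using exponent_ineq[of p v k t] p vpos h1 h2 t by simp
    finally show ?thesis .
  qed
  have t2: "real t + 1 \<le> 2 * 2 ^ (t - 1)"
  proof -
    have "t + 1 \<le> 2 ^ t" by (induction t) auto
    hence "real (t + 1) \<le> real (2 ^ t)" by (simp only: of_nat_le_iff)
    thus ?thesis using t by (cases t) auto
  qed
  have "real (n choose (k+t)) * (z ^ ((k+t) choose 2) * (real t + 1) * ((1 + v^3) ^ (2 * (k+t)) / v ^ 4) ^ t)
      = (real (n choose (k+t)) * z ^ ((k+t) choose 2)) * (real t + 1) * ((1 + v^3) ^ (2 * (k+t)) / v ^ 4) ^ t"
    by (simp add: algebra_simps)
  also have "\<dots> \<le> (Fk * \<delta> ^ (t - 1) * z ^ (t choose 2)) * (real t + 1) * (exp (2 * real (k+t) * real t * v^3) / (v^4) ^ t)"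
  proof (rule mult_mono[OF mult_right_mono[OF A] B])
    show "0 \<le> Fk * \<delta> ^ (t - 1) * z ^ (t choose 2) * (real t + 1)"
      using Fk0 \<delta>0 z by simp
    show "0 \<le> ((1 + v^3) ^ (2 * (k+t)) / v ^ 4) ^ t" using vpos by simp
  qed simp
  also have "\<dots> = Fk * \<delta> ^ (t - 1) * (real t + 1) / (v^4) ^ t * (z ^ (t choose 2) * exp (2 * real (k+t) * real t * v^3))"
    by (simp add: algebra_simps)
  also have "\<dots> \<le> Fk * \<delta> ^ (t - 1) * (real t + 1) / (v^4) ^ t * exp (real t)"
    using EX Fk0 \<delta>0 vpos by (intro mult_left_mono) auto
  also have "\<dots> = Fk * (exp 1 / v^4) * (real t + 1) * \<rho> ^ (t - 1)"
  proof -
    have "exp (real t) = exp 1 ^ t" by (simp add: exp_of_nat_mult[symmetric])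
    also have "\<dots> = exp 1 * exp 1 ^ (t - 1)" using t by (simp add: power_Suc[symmetric])
    finally have "exp (real t) = exp 1 * exp 1 ^ (t - 1)" .
    moreover have "(v^4) ^ t = v^4 * (v^4) ^ (t - 1)" using t
      by (simp add: power_Suc[symmetric])
    ultimately show ?thesis unfolding \<rho>_def using vpos by (simp add: power_mult_distrib power_divide field_simps)
  qed
  also have "\<dots> \<le> Fk * (exp 1 / v^4) * (2 * 2 ^ (t - 1)) * \<rho> ^ (t - 1)"
    using t2 Fk0 vpos rho0 by (intro mult_right_mono mult_left_mono) auto
  also have "\<dots> = Fk * (exp 1 / v^4) * 2 * (2 * \<rho>) ^ (t - 1)" by (simp add: power_mult_distrib)
  also have "\<dots> \<le> Fk * (exp 1 / v^4) * 2 * (1/2) ^ (t - 1)"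
    using rho rho0 Fk0 vpos by (intro mult_left_mono power_mono) auto
  finally show ?thesis unfolding z_def Fk_def .
qed

lemma bad_analytic:
  fixes p v :: real and k n :: nat
  assumes p: "0 < p" "p \<le> 1/2" and v: "v = sqrt (p / (1 - p))" and kn: "k + 1 \<le> n"
    and F: "real (n choose (k+1)) * (1 - p) ^ ((k+1) choose 2) \<le> 1"
    and h1: "4 * v^3 \<le> p" and h2: "4 * real k * v^3 \<le> 1"
    and h3: "exp 1 * (real k + 1) / (real n * v^4) \<le> 1/4"
  shows "(\<Sum>m\<in>{k+1..n}. real (n choose m) * ((1 - p) ^ (m choose 2) * (real (m - k) + 1) *
         ((1 + v^3) ^ (2 * m) / v ^ 4) ^ (m - k)))
     \<le> 4 * exp 1 * (real (n choose (k+1)) * (1 - p) ^ ((k+1) choose 2)) / v^4"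
proof -
  define Fk where "Fk = real (n choose (k+1)) * (1 - p) ^ ((k+1) choose 2)"
  have Fk0: "Fk \<ge> 0" unfolding Fk_def using p by simp
  have "(\<Sum>m\<in>{k+1..n}. real (n choose m) * ((1 - p) ^ (m choose 2) * (real (m - k) + 1) *
         ((1 + v^3) ^ (2 * m) / v ^ 4) ^ (m - k))) \<le>
        (\<Sum>m\<in>{k+1..n}. Fk * (exp 1 / v^4) * 2 * (1/2) ^ (m - (k+1)))"
  proof (intro sum_mono)
    fix m assume m: "m \<in> {k+1..n}"
    define t where "t = m - k"
    have t1: "t \<ge> 1" and mt: "m = k + t" using m unfolding t_def by auto
    have "t - 1 = m - (k+1)" unfolding t_def by simp
    thus "real (n choose m) * ((1 - p) ^ (m choose 2) * (real (m - k) + 1) *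
         ((1 + v^3) ^ (2 * m) / v ^ 4) ^ (m - k)) \<le> Fk * (exp 1 / v^4) * 2 * (1/2) ^ (m - (k+1))"
      using bad_term[OF p v kn F h1 h2 h3 t1] unfolding Fk_def mt by simp
  qed
  also have "\<dots> = Fk * (exp 1 / v^4) * 2 * (\<Sum>m\<in>{k+1..n}. (1/2::real) ^ (m - (k+1)))"
    by (simp add: sum_distrib_left)
  also have "\<dots> \<le> Fk * (exp 1 / v^4) * 2 * 2"
    using geom_le[of "1/2::real" "k+1" n] Fk0 by (intro mult_left_mono) auto
  finally show ?thesis unfolding Fk_def by (simp add: field_simps)
qed

lemma pow_fact_le_exp: assumes "0 \<le> (x::real)" shows "x ^ n / fact n \<le> exp x"
proof -
  have s: "summable (\<lambda>m. x ^ m /\<^sub>R fact m)" by (rule summable_exp_generic)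
  have "sum (\<lambda>m. x ^ m /\<^sub>R fact m) {n} \<le> suminf (\<lambda>m. x ^ m /\<^sub>R fact m)"
    by (rule sum_le_suminf[OF s]) (auto simp: assms)
  thus ?thesis by (simp add: exp_def divide_inverse mult.commute)
qed

lemma binom_le_en:
  assumes "1 \<le> s"
  shows "real (n choose s) \<le> (exp 1 * real n / real s) ^ s"
proof -
  have a: "real (n choose s) * fact s \<le> real n ^ s"
    using binomial_fact_pow[of n s] by (metis of_nat_fact of_nat_le_iff of_nat_mult of_nat_power)
  have b: "real s ^ s / fact s \<le> exp (real s)" by (rule pow_fact_le_exp) simp
  have fpos: "(fact s :: real) > 0" by simp
  have spos: "real s > 0" using assms by simp
  have "real (n choose s) \<le> real n ^ s / fact s" using a fpos by (simp add: field_simps)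
  also have "\<dots> = (real n / real s) ^ s * (real s ^ s / fact s)"
    using spos by (simp add: power_divide field_simps)
  also have "\<dots> \<le> (real n / real s) ^ s * exp (real s)"
    using b by (intro mult_left_mono) auto
  also have "\<dots> = (exp 1 * real n / real s) ^ s"
    by (simp add: power_mult_distrib exp_of_nat_mult[symmetric] field_simps)
  finally show ?thesis .
qed

lemma binom_down:
  assumes "i \<le> s" "s < n"
  shows "real (n choose (s - i)) \<le> real (n choose s) * (real s / (real n - real s)) ^ i"
  using assms(1)
proof (induction i)
  case 0 thus ?case by simp
next
  case (Suc i)
  define m where "m = s - Suc i"
  have m: "Suc m = s - i" "m < s" using Suc.prems unfolding m_def by auto
  have ns: "real n - real s > 0" using assms by simp
  have nm: "real n - real m > 0" using m assms by simp
  have "real (n choose m) * (real n - real m) = real (n choose Suc m) * real (Suc m)"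
    using binom_rec[of n m] by simp
  hence e: "real (n choose m) = real (n choose Suc m) * real (Suc m) / (real n - real m)"
    using nm by (simp add: field_simps)
  have "real (Suc m) / (real n - real m) \<le> real s / (real n - real s)"
    using m ns nm by (intro frac_le) auto
  hence "real (n choose Suc m) * (real (Suc m) / (real n - real m)) \<le> real (n choose Suc m) * (real s / (real n - real s))"
    by (intro mult_left_mono) auto
  hence "real (n choose m) \<le> real (n choose Suc m) * (real s / (real n - real s))"
    unfolding e by simp
  also have "\<dots> \<le> real (n choose s) * (real s / (real n - real s)) ^ i * (real s / (real n - real s))"
    using Suc m ns by (intro mult_right_mono) auto
  finally show ?case unfolding m_def by (simp add: power_Suc algebra_simps)
qed

lemma sum_rev_geom:
  fixes x :: real assumes "0 \<le> x" "x < 1"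
  shows "(\<Sum>i\<in>{0..s}. x ^ (s - i)) \<le> 1 / (1 - x)"
proof -
  have "(\<Sum>i\<in>{0..s}. x ^ (s - i)) = (\<Sum>i\<in>{0..s}. x ^ (s + 0 - (s + 0 - i)))"
    by (subst sum.atLeastAtMost_rev) simp
  also have "\<dots> = (\<Sum>i\<in>{0..s}. x ^ (i - 0))" by (intro sum.cong) auto
  also have "\<dots> \<le> 1 / (1 - x)" by (rule geom_le[OF assms])
  finally show ?thesis .
qed

lemma good_terms:
  fixes p K \<eta> \<theta> :: real and n k i :: nat
  assumes p: "0 < p" "p \<le> 1/2" and k: "3 \<le> k" and kn: "k + 1 \<le> n"
    and F1: "real (n choose (k+1)) * (1 - p) ^ ((k+1) choose 2) \<le> 1"
    and Fs: "real (n choose (k-1)) * (1 - p) ^ ((k-1) choose 2) \<ge> 1"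
    and K: "real k + 1 \<le> K" "K \<le> real n / 2"
    and \<eta>: "0 < \<eta>" "\<eta> \<le> 1" and \<theta>: "0 < \<theta>" "\<theta> < 1"
    and i: "2 \<le> i" "i \<le> k - 1"
  defines "s \<equiv> k - 1"
  defines "T \<equiv> real (s choose i) * real ((n - s) choose (s - i)) / real (n choose s) * wt p i"
  defines "b1 \<equiv> K\<^sup>2 / (real n / 2) * (exp 1 * real n) powr \<eta>"
  defines "B2 \<equiv> 2 * exp 1 * (K / real n) powr (1 - \<theta>)"
  defines "B3 \<equiv> 4 * K\<^sup>2 * (K / real n) powr \<theta>"
  defines "Fs' \<equiv> real (n choose (k-1)) * (1 - p) ^ ((k-1) choose 2)"
  shows "(real i \<le> \<eta> * real s \<longrightarrow> T \<le> b1 ^ i) \<and>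
         (\<eta> * real s < real i \<and> real i \<le> \<theta> * real s \<longrightarrow> B2 \<le> 1 \<longrightarrow> T \<le> 2 ^ s * B2 powr (\<eta> * real s)) \<and>
         (\<theta> * real s < real i \<longrightarrow> T \<le> B3 ^ (s - i) / Fs')"
proof -
  define L where "L = - ln (1 - p)"
  have z: "0 < 1 - p" "1 - p < 1" using p by auto
  have L0: "L > 0" unfolding L_def using z by simp
  have zL: "1 - p = exp (- L)" unfolding L_def using z by simp
  have eL: "exp L \<le> 2" unfolding L_def using z p by (simp add: exp_minus field_simps)
  have zpow: "(1 - p) ^ N = exp (- L * real N)" for N
    unfolding zL by (simp add: exp_of_nat_mult[symmetric] mult.commute)
  have wt: "wt p j = exp (L * real (j choose 2))" for j
    unfolding wt_def zpow by (simp add: exp_minus field_simps)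
  have n0: "real n > 0" using kn by simp
  have s2: "s \<ge> 2" "s < n" "k = s + 1" unfolding s_def using k kn by auto
  have sK: "real s \<le> K" "real s \<ge> 2" using K s2 by auto
  have nsn: "real n - real s \<ge> real n / 2" using sK K by simp
  have Fs'1: "Fs' \<ge> 1" using Fs unfolding Fs'_def .
  have lnb: "L * (real s - 1) / 2 \<le> ln (exp 1 * real n / real s)"
  proof -
    have "1 \<le> real (n choose s) * exp (- L * real (s choose 2))" using Fs unfolding s_def zpow .
    hence "exp (L * real (s choose 2)) \<le> real (n choose s)" by (simp add: exp_minus field_simps)
    also have "\<dots> \<le> (exp 1 * real n / real s) ^ s" using binom_le_en[of s n] s2 by simp
    finally have "L * real (s choose 2) \<le> ln ((exp 1 * real n / real s) ^ s)"
      using sK n0 by (subst ln_ge_iff) auto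
    also have "\<dots> = real s * ln (exp 1 * real n / real s)" using sK n0 by (simp add: ln_realpow)
    finally have "L * (real s * (real s - 1) / 2) \<le> real s * ln (exp 1 * real n / real s)"
      by (simp add: choose2_real)
    hence "real s * (L * (real s - 1) / 2) \<le> real s * ln (exp 1 * real n / real s)"
      by (simp add: algebra_simps)
    thus ?thesis using sK by (simp add: mult_le_cancel_left_pos)
  qed
  have Dk: "exp (- L * real k / 2) \<le> (real k + 1) / real n"
  proof -
    have "exp (- L * real k) \<le> ((real k + 1) / real n)\<^sup>2"
      using D_bound[of p k n] p kn F1 unfolding zpow by simp
    also have "exp (- L * real k) = (exp (- L * real k / 2))\<^sup>2"
      by (simp add: power2_eq_square exp_add[symmetric])
    finally show ?thesis using n0 by (simp add: power_mono_iff[of 2] abs_le_square_iff)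
  qed
  have eT: "T = real (s choose i) * real ((n - s) choose (s - i)) / real (n choose s) * exp (L * real (i choose 2))"
    unfolding T_def wt ..
  have Cns: "real (n choose s) > 0" using s2 by simp
  have ei: "exp (L * real (i choose 2)) = exp (L * (real i - 1) / 2) ^ i"
    by (simp add: exp_of_nat_mult[symmetric] choose2_real field_simps)
  have T12: "T \<le> real (s choose i) * (real s / (real n - real s)) ^ i * exp (L * (real i - 1) / 2) ^ i"
  proof -
    have "real ((n - s) choose (s - i)) \<le> real (n choose (s - i))"
      using binomial_right_mono[of "n - s" n "s - i"] by simp
    also have "\<dots> \<le> real (n choose s) * (real s / (real n - real s)) ^ i"
      using binom_down[of i s n] i s2 unfolding s_def by simp
    finally have c: "real ((n - s) choose (s - i)) / real (n choose s) \<le> (real s / (real n - real s)) ^ i"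
      using Cns by (simp add: divide_le_eq mult.commute)
    have "T = real (s choose i) * (real ((n - s) choose (s - i)) / real (n choose s)) * exp (L * (real i - 1) / 2) ^ i"
      unfolding eT ei by simp
    also have "\<dots> \<le> real (s choose i) * (real s / (real n - real s)) ^ i * exp (L * (real i - 1) / 2) ^ i"
      using c by (intro mult_right_mono mult_left_mono) auto
    finally show ?thesis .
  qed
  have R1: "real i \<le> \<eta> * real s \<longrightarrow> T \<le> b1 ^ i"
  proof
    assume ia: "real i \<le> \<eta> * real s"
    have "L * (real i - 1) / 2 \<le> \<eta> * (L * (real s - 1) / 2)"
    proof -
      have "real i - 1 \<le> \<eta> * (real s - 1)" using ia \<eta> by (simp add: algebra_simps)
      hence "L * (real i - 1) \<le> L * (\<eta> * (real s - 1))" using L0 by (intro mult_left_mono) auto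
      thus ?thesis by (simp add: field_simps)
    qed
    also have "\<dots> \<le> \<eta> * ln (exp 1 * real n / real s)" using lnb \<eta> by (simp add: mult_left_mono)
    also have "\<dots> \<le> \<eta> * ln (exp 1 * real n)" using sK n0 \<eta>
      by (intro mult_left_mono) (auto simp: field_simps)
    finally have ex: "exp (L * (real i - 1) / 2) \<le> (exp 1 * real n) powr \<eta>"
      using n0 by (simp add: powr_def)
    have c1: "real (s choose i) \<le> real s ^ i"
      using binomial_le_pow[of i s] i unfolding s_def by (simp only: of_nat_le_iff of_nat_power[symmetric])
    have e1: "exp (L * (real i - 1) / 2) ^ i \<le> ((exp 1 * real n) powr \<eta>) ^ i"
      by (rule power_mono[OF ex]) simp
    have a0: "0 \<le> (real s / (real n - real s)) ^ i" using nsn n0 by simp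
    have "T \<le> real s ^ i * (real s / (real n - real s)) ^ i * ((exp 1 * real n) powr \<eta>) ^ i"
    proof -
      have "0 \<le> real s ^ i * (real s / (real n - real s)) ^ i" using a0 by simp
      hence "real (s choose i) * (real s / (real n - real s)) ^ i * exp (L * (real i - 1) / 2) ^ i
        \<le> real s ^ i * (real s / (real n - real s)) ^ i * ((exp 1 * real n) powr \<eta>) ^ i"
        using mult_mono[OF mult_right_mono[OF c1 a0] e1] by simp
      thus ?thesis using T12 by linarith
    qed
    also have "\<dots> = (real s * (real s / (real n - real s)) * (exp 1 * real n) powr \<eta>) ^ i"
      by (simp only: power_mult_distrib)
    also have "\<dots> \<le> b1 ^ i" unfolding b1_def
    proof (intro power_mono mult_right_mono)
      have "real s * real s / (real n - real s) \<le> K\<^sup>2 / (real n / 2)"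
        using sK nsn n0 by (intro frac_le) (auto simp: power2_eq_square intro: mult_mono)
      thus "real s * (real s / (real n - real s)) \<le> K\<^sup>2 / (real n / 2)" by simp
    qed (use sK nsn in auto)
    finally show "T \<le> b1 ^ i" .
  qed
  have Kpos: "K > 0" using K by simp
  have R2: "\<eta> * real s < real i \<and> real i \<le> \<theta> * real s \<longrightarrow> B2 \<le> 1 \<longrightarrow> T \<le> 2 ^ s * B2 powr (\<eta> * real s)"
  proof (intro impI)
    assume ia: "\<eta> * real s < real i \<and> real i \<le> \<theta> * real s" and B21: "B2 \<le> 1"
    have "L * (real i - 1) / 2 \<le> \<theta> * (L * (real s - 1) / 2)"
    proof -
      have "real i - 1 \<le> \<theta> * (real s - 1)" using ia \<theta> by (simp add: algebra_simps)
      hence "L * (real i - 1) \<le> L * (\<theta> * (real s - 1))" using L0 by (intro mult_left_mono) auto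
      thus ?thesis by (simp add: field_simps)
    qed
    also have "\<dots> \<le> \<theta> * ln (exp 1 * real n / real s)" using lnb \<theta> by (simp add: mult_left_mono)
    finally have ex: "exp (L * (real i - 1) / 2) \<le> (exp 1 * real n / real s) powr \<theta>"
      using n0 sK by (simp add: powr_def)
    have c1: "real (s choose i) \<le> 2 ^ s"
    proof -
      have "real (s choose i) \<le> real ((2::nat) ^ s)" using binomial_le_pow2[of s i] by (simp only: of_nat_le_iff)
      thus ?thesis by simp
    qed
    have e1: "exp (L * (real i - 1) / 2) ^ i \<le> ((exp 1 * real n / real s) powr \<theta>) ^ i"
      by (rule power_mono[OF ex]) simp
    have a0: "0 \<le> (real s / (real n - real s)) ^ i" using nsn n0 by simp
    define w where "w = real s / (real n - real s) * (exp 1 * real n / real s) powr \<theta>"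
    have w0: "w \<ge> 0" unfolding w_def using nsn n0 by simp
    have "T \<le> 2 ^ s * (real s / (real n - real s)) ^ i * ((exp 1 * real n / real s) powr \<theta>) ^ i"
    proof -
      have "0 \<le> (2::real) ^ s * (real s / (real n - real s)) ^ i" using a0 by simp
      hence "real (s choose i) * (real s / (real n - real s)) ^ i * exp (L * (real i - 1) / 2) ^ i
        \<le> 2 ^ s * (real s / (real n - real s)) ^ i * ((exp 1 * real n / real s) powr \<theta>) ^ i"
        using mult_mono[OF mult_right_mono[OF c1 a0] e1] by simp
      thus ?thesis using T12 by linarith
    qed
    also have "\<dots> = 2 ^ s * w ^ i" unfolding w_def by (simp only: power_mult_distrib mult.assoc)
    also have "w \<le> B2"
    proof -
      have sn: "real s / real n > 0" using sK n0 by simp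
      have "real s / (real n - real s) \<le> 2 * (real s / real n)"
        using nsn n0 sK by (simp add: field_simps)
      moreover have "(exp 1 * real n / real s) powr \<theta> \<le> exp 1 * (real s / real n) powr (- \<theta>)"
      proof -
        have "(exp 1 * real n / real s) powr \<theta> = exp 1 powr \<theta> * (real s / real n) powr (- \<theta>)"
          using n0 sK by (simp add: powr_mult powr_minus_divide powr_divide field_simps)
        also have "exp 1 powr \<theta> \<le> exp 1" using \<theta> by (simp add: powr_def)
        hence "exp 1 powr \<theta> * (real s / real n) powr (- \<theta>) \<le> exp 1 * (real s / real n) powr (- \<theta>)"
          by (intro mult_right_mono) auto
        finally show ?thesis .
      qed
      ultimately have "w \<le> 2 * (real s / real n) * (exp 1 * (real s / real n) powr (- \<theta>))"
        unfolding w_def using sn by (intro mult_mono) auto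
      also have "\<dots> = 2 * exp 1 * ((real s / real n) powr 1 * (real s / real n) powr (- \<theta>))"
        using sn by simp
      also have "\<dots> = 2 * exp 1 * (real s / real n) powr (1 + - \<theta>)"
        by (simp only: powr_add)
      also have "\<dots> = 2 * exp 1 * (real s / real n) powr (1 - \<theta>)" by simp
      also have "\<dots> \<le> B2" unfolding B2_def using sK n0 \<theta>
        by (intro mult_left_mono powr_mono2 divide_right_mono) auto
      finally show ?thesis .
    qed
    hence "2 ^ s * w ^ i \<le> 2 ^ s * B2 ^ i" using w0 by (intro mult_left_mono power_mono) auto
    also have "B2 ^ i = B2 powr real i" using Kpos n0 unfolding B2_def by (simp add: powr_realpow)
    also have "\<dots> \<le> B2 powr (\<eta> * real s)" using ia B21 Kpos n0 unfolding B2_def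
      by (intro powr_mono') auto
    finally show "T \<le> 2 ^ s * B2 powr (\<eta> * real s)" by simp
  qed
  have R3: "\<theta> * real s < real i \<longrightarrow> T \<le> B3 ^ (s - i) / Fs'"
  proof
    assume ia: "\<theta> * real s < real i"
    define j where "j = s - i"
    have iS: "i \<le> s" using i unfolding s_def by simp
    have Fs'e: "Fs' = real (n choose s) * exp (- L * real (s choose 2))"
      unfolding Fs'_def s_def zpow ..
    have Fs'0: "Fs' > 0" using Fs'1 by simp
    have c1: "real (s choose i) \<le> real s ^ j"
    proof -
      have "s choose i = s choose j" unfolding j_def using binomial_symmetric[OF iS] .
      also have "\<dots> \<le> s ^ j" using binomial_le_pow[of j s] unfolding j_def by simp
      finally show ?thesis by (simp only: of_nat_le_iff of_nat_power[symmetric])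
    qed
    have c2: "real ((n - s) choose (s - i)) \<le> real n ^ j"
    proof (cases "j \<le> n - s")
      case True
      have "(n - s) choose j \<le> (n - s) ^ j" by (rule binomial_le_pow[OF True])
      also have "\<dots> \<le> n ^ j" by (intro power_mono) auto
      finally show ?thesis unfolding j_def by (simp only: of_nat_le_iff of_nat_power[symmetric])
    next
      case False thus ?thesis unfolding j_def by (simp add: binomial_eq_0)
    qed
    have ex: "exp (L * real (i choose 2)) / real (n choose s) = exp (- L * (real s + real i - 1) / 2) ^ j / Fs'"
    proof -
      have d: "real (s choose 2) - real (i choose 2) = real j * (real s + real i - 1) / 2"
        unfolding j_def using iS by (simp add: choose2_real of_nat_diff field_simps)
      have "exp (- L * (real s + real i - 1) / 2) ^ j = exp (- L * (real (s choose 2) - real (i choose 2)))"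
        unfolding d by (simp add: exp_of_nat_mult[symmetric] field_simps)
      also have "\<dots> = exp (L * real (i choose 2)) * exp (- L * real (s choose 2))"
        by (simp add: exp_add[symmetric] algebra_simps)
      finally show ?thesis unfolding Fs'e using Cns by (simp add: field_simps)
    qed
    have base: "real s * real n * exp (- L * (real s + real i - 1) / 2) \<le> B3"
    proof -
      have e0: "exp (- L * (real s + real i - 1) / 2) = (exp (- L * real k / 2) * exp L) * exp (- L * real i / 2)"
        using s2 by (simp add: exp_add[symmetric] field_simps)
      have e1: "exp (- L * real k / 2) * exp L \<le> (real k + 1) / real n * 2"
        using Dk eL by (intro mult_mono) auto
      have e2: "exp (- L * real i / 2) \<le> ((real k + 1) / real n) powr \<theta> * 2"
      proof -
        have "- L * real i / 2 \<le> \<theta> * (- L * real k / 2) + L * \<theta> / 2"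
        proof -
          have "L * (\<theta> * real s) \<le> L * real i" using ia L0 by (intro mult_left_mono) auto
          thus ?thesis using s2 by (simp add: field_simps)
        qed
        hence "exp (- L * real i / 2) \<le> exp (\<theta> * (- L * real k / 2)) * exp (L * \<theta> / 2)"
          by (simp add: exp_add[symmetric])
        also have "exp (\<theta> * (- L * real k / 2)) = exp (- L * real k / 2) powr \<theta>"
          by (simp add: powr_def)
        also have "\<dots> \<le> ((real k + 1) / real n) powr \<theta>" using Dk \<theta> by (intro powr_mono2) auto
        also have "exp (L * \<theta> / 2) \<le> 2"
        proof -
          have "L * \<theta> / 2 \<le> L" using L0 \<theta> by (simp add: field_simps)
          thus ?thesis using eL by (meson exp_le_cancel_iff order_trans)
        qed
        finally show ?thesis by (simp add: mult_left_mono)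
      qed
      have e: "exp (- L * (real s + real i - 1) / 2) \<le> (real k + 1) / real n * 2 * (((real k + 1) / real n) powr \<theta> * 2)"
        unfolding e0 by (rule mult_mono[OF e1 e2]) (use n0 in auto)
      have "real s * real n * exp (- L * (real s + real i - 1) / 2) \<le>
            real s * real n * ((real k + 1) / real n * 2 * (((real k + 1) / real n) powr \<theta> * 2))"
        using e by (intro mult_left_mono) auto
      also have "\<dots> = 4 * real s * (real k + 1) * ((real k + 1) / real n) powr \<theta>"
        using n0 by (simp add: field_simps)
      also have "\<dots> \<le> 4 * K * K * (K / real n) powr \<theta>"
        using sK K n0 \<theta> by (intro mult_mono powr_mono2 divide_right_mono) auto
      finally show ?thesis unfolding B3_def by (simp add: power2_eq_square mult.assoc)
    qed
    have "T = real (s choose i) * real ((n - s) choose (s - i)) * (exp (L * real (i choose 2)) / real (n choose s))"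
      unfolding eT by simp
    also have "\<dots> = real (s choose i) * real ((n - s) choose (s - i)) * exp (- L * (real s + real i - 1) / 2) ^ j / Fs'"
      unfolding ex by simp
    also have "\<dots> \<le> real s ^ j * real n ^ j * exp (- L * (real s + real i - 1) / 2) ^ j / Fs'"
      using c1 c2 Fs'0 by (intro divide_right_mono mult_right_mono mult_mono) auto
    also have "\<dots> = (real s * real n * exp (- L * (real s + real i - 1) / 2)) ^ j / Fs'"
      by (simp add: power_mult_distrib)
    also have "\<dots> \<le> B3 ^ j / Fs'"
      using base Fs'0 by (intro divide_right_mono power_mono) auto
    finally show "T \<le> B3 ^ (s - i) / Fs'" unfolding j_def .
  qed
  show ?thesis using R1 R2 R3 by blast
qed

lemma s_half_pow: "1 \<le> s \<Longrightarrow> real s * (1/2) ^ (s - 1) \<le> 1"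
proof -
  assume s: "1 \<le> s"
  have "s \<le> 2 ^ (s - 1)"
  proof (induction s)
    case 0 thus ?case by simp
  next
    case (Suc s) thus ?case by (cases s) auto
  qed
  hence "real s \<le> 2 ^ (s - 1)" by (metis of_nat_le_iff of_nat_numeral of_nat_power)
  thus ?thesis by (simp add: field_simps power_divide)
qed

lemma good_sum:
  fixes p K \<eta> \<theta> :: real and n k :: nat
  assumes p: "0 < p" "p \<le> 1/2" and k: "3 \<le> k" and kn: "k + 1 \<le> n"
    and F1: "real (n choose (k+1)) * (1 - p) ^ ((k+1) choose 2) \<le> 1"
    and Fs: "real (n choose (k-1)) * (1 - p) ^ ((k-1) choose 2) \<ge> 1"
    and K: "real k + 1 \<le> K" "K \<le> real n / 2"
    and \<eta>: "0 < \<eta>" "\<eta> \<le> 1" and \<theta>: "0 < \<theta>" "\<theta> < 1"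
    and hb1: "K\<^sup>2 / (real n / 2) * (exp 1 * real n) powr \<eta> \<le> 1/2"
    and hB2: "2 * exp 1 * (K / real n) powr (1 - \<theta>) \<le> 1"
    and hy: "2 * (2 * exp 1 * (K / real n) powr (1 - \<theta>)) powr \<eta> \<le> 1/2"
    and hB3: "4 * K\<^sup>2 * (K / real n) powr \<theta> \<le> 1/2"
  shows "(\<Sum>i\<in>{2..k-1}. real ((k-1) choose i) * real ((n - (k-1)) choose ((k-1) - i)) / real (n choose (k-1)) * wt p i)
     \<le> 2 * (K\<^sup>2 / (real n / 2) * (exp 1 * real n) powr \<eta>)\<^sup>2
        + 4 * (2 * exp 1 * (K / real n) powr (1 - \<theta>)) powr \<eta>
        + 2 / (real (n choose (k-1)) * (1 - p) ^ ((k-1) choose 2))"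
proof -
  define s where "s = k - 1"
  define b1 where "b1 = K\<^sup>2 / (real n / 2) * (exp 1 * real n) powr \<eta>"
  define B2 where "B2 = 2 * exp 1 * (K / real n) powr (1 - \<theta>)"
  define B3 where "B3 = 4 * K\<^sup>2 * (K / real n) powr \<theta>"
  define Fs' where "Fs' = real (n choose (k-1)) * (1 - p) ^ ((k-1) choose 2)"
  define y where "y = 2 * B2 powr \<eta>"
  define T where "T = (\<lambda>i. real (s choose i) * real ((n - s) choose (s - i)) / real (n choose s) * wt p i)"
  have n0: "real n > 0" using kn by simp
  have Kpos: "K > 0" using K by simp
  have b10: "b1 \<ge> 0" "b1 \<le> 1/2" unfolding b1_def using hb1 n0 by auto
  have B30: "B3 \<ge> 0" "B3 \<le> 1/2" unfolding B3_def using hB3 by auto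
  have y0: "y \<ge> 0" "y \<le> 1/2" unfolding y_def B2_def using hy by auto
  have Fs'0: "Fs' > 0" unfolding Fs'_def using Fs by simp
  have s1: "s \<ge> 2" unfolding s_def using k by simp
  have Y: "2 ^ s * B2 powr (\<eta> * real s) = y ^ s"
  proof -
    have B2pos: "B2 > 0" unfolding B2_def using Kpos n0 by simp
    have B2n: "B2 \<noteq> 0" using B2pos by simp
    have "B2 powr (\<eta> * real s) = (B2 powr \<eta>) powr real s" using B2pos by (simp add: powr_powr)
    also have "\<dots> = (B2 powr \<eta>) ^ s" by (rule powr_realpow) (simp add: B2n)
    finally have "B2 powr (\<eta> * real s) = (B2 powr \<eta>) ^ s" .
    thus ?thesis unfolding y_def by (simp add: power_mult_distrib)
  qed
  have pt: "T i \<le> (if real i \<le> \<eta> * real s then b1 ^ i else 0)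
        + (if \<eta> * real s < real i \<and> real i \<le> \<theta> * real s then y ^ s else 0)
        + (if \<theta> * real s < real i then B3 ^ (s - i) / Fs' else 0)" if i: "i \<in> {2..s}" for i
  proof -
    have gt: "(real i \<le> \<eta> * real s \<longrightarrow> T i \<le> b1 ^ i) \<and>
         (\<eta> * real s < real i \<and> real i \<le> \<theta> * real s \<longrightarrow> B2 \<le> 1 \<longrightarrow> T i \<le> 2 ^ s * B2 powr (\<eta> * real s)) \<and>
         (\<theta> * real s < real i \<longrightarrow> T i \<le> B3 ^ (s - i) / Fs')"
      unfolding T_def s_def b1_def B2_def B3_def Fs'_def
      by (rule good_terms[OF p k kn F1 Fs K \<eta> \<theta>]) (use i s_def in auto)
    have B21: "B2 \<le> 1" unfolding B2_def using hB2 .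
    show ?thesis
    proof (cases "real i \<le> \<eta> * real s")
      case True
      thus ?thesis using gt y0 B30 Fs'0 \<eta> \<theta> by (auto intro: add_increasing2 simp: add_nonneg_nonneg)
    next
      case F1: False
      show ?thesis
      proof (cases "real i \<le> \<theta> * real s")
        case True thus ?thesis using gt F1 B21 Y B30 Fs'0 by auto
      next
        case False thus ?thesis using gt F1 B30 Fs'0 by auto
      qed
    qed
  qed
  have "(\<Sum>i\<in>{2..s}. T i) \<le> (\<Sum>i\<in>{2..s}. (if real i \<le> \<eta> * real s then b1 ^ i else 0)
        + (if \<eta> * real s < real i \<and> real i \<le> \<theta> * real s then y ^ s else 0)
        + (if \<theta> * real s < real i then B3 ^ (s - i) / Fs' else 0))"
    by (rule sum_mono) (rule pt)
  also have "\<dots> = (\<Sum>i\<in>{2..s}. (if real i \<le> \<eta> * real s then b1 ^ i else 0))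
        + (\<Sum>i\<in>{2..s}. (if \<eta> * real s < real i \<and> real i \<le> \<theta> * real s then y ^ s else 0))
        + (\<Sum>i\<in>{2..s}. (if \<theta> * real s < real i then B3 ^ (s - i) / Fs' else 0))"
    by (simp add: sum.distrib)
  also have "(\<Sum>i\<in>{2..s}. (if real i \<le> \<eta> * real s then b1 ^ i else 0)) \<le> 2 * b1\<^sup>2"
  proof -
    have "(\<Sum>i\<in>{2..s}. (if real i \<le> \<eta> * real s then b1 ^ i else 0)) \<le> (\<Sum>i\<in>{2..s}. b1\<^sup>2 * b1 ^ (i - 2))"
    proof (intro sum_mono)
      fix i assume "i \<in> {2..s}"
      hence "i = 2 + (i - 2)" by auto
      hence "b1 ^ i = b1 ^ (2 + (i - 2))" by (metis)
      hence "b1 ^ i = b1\<^sup>2 * b1 ^ (i - 2)" by (simp only: power_add)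
      thus "(if real i \<le> \<eta> * real s then b1 ^ i else 0) \<le> b1\<^sup>2 * b1 ^ (i - 2)" using b10 by auto
    qed
    also have "\<dots> = b1\<^sup>2 * (\<Sum>i\<in>{2..s}. b1 ^ (i - 2))" by (simp add: sum_distrib_left)
    also have "\<dots> \<le> b1\<^sup>2 * (1 / (1 - b1))" using geom_le[of b1 2 s] b10 by (intro mult_left_mono) auto
    also have "\<dots> \<le> b1\<^sup>2 * 2" using b10 by (intro mult_left_mono) (auto simp: field_simps)
    finally show ?thesis by simp
  qed
  also have "(\<Sum>i\<in>{2..s}. (if \<eta> * real s < real i \<and> real i \<le> \<theta> * real s then y ^ s else 0)) \<le> 2 * y"
  proof -
    have "(\<Sum>i\<in>{2..s}. (if \<eta> * real s < real i \<and> real i \<le> \<theta> * real s then y ^ s else 0)) \<le> (\<Sum>i\<in>{2..s}. y ^ s)"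
      using y0 by (intro sum_mono) auto
    also have "\<dots> \<le> real s * y ^ s" using s1 y0 by (simp add: mult_right_mono)
    also have "\<dots> = y * (real s * y ^ (s - 1))" using s1 by (simp add: power_Suc[symmetric])
    also have "\<dots> \<le> y * (real s * (1/2) ^ (s - 1))" using y0 by (intro mult_left_mono power_mono) auto
    also have "\<dots> \<le> y * 1" using s_half_pow[of s] s1 y0 by (intro mult_left_mono) auto
    finally show ?thesis using y0 by simp
  qed
  also have "(\<Sum>i\<in>{2..s}. (if \<theta> * real s < real i then B3 ^ (s - i) / Fs' else 0)) \<le> 2 / Fs'"
  proof -
    have "(\<Sum>i\<in>{2..s}. (if \<theta> * real s < real i then B3 ^ (s - i) / Fs' else 0)) \<le> (\<Sum>i\<in>{2..s}. B3 ^ (s - i) / Fs')"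
      using B30 Fs'0 by (intro sum_mono) auto
    also have "\<dots> \<le> (\<Sum>i\<in>{0..s}. B3 ^ (s - i) / Fs')"
      using B30 Fs'0 by (intro sum_mono2) auto
    also have "\<dots> = (\<Sum>i\<in>{0..s}. B3 ^ (s - i)) / Fs'" by (simp add: sum_divide_distrib)
    also have "\<dots> \<le> (1 / (1 - B3)) / Fs'" using sum_rev_geom[of B3 s] B30 Fs'0 by (intro divide_right_mono) auto
    also have "\<dots> \<le> 2 / Fs'" using B30 Fs'0 by (intro divide_right_mono) (auto simp: field_simps)
    finally show ?thesis .
  qed
  finally show ?thesis unfolding T_def s_def b1_def y_def B2_def Fs'_def by simp
qed

lemma bp_mono: "biclique_partitionable F r \<Longrightarrow> r \<le> r' \<Longrightarrow> biclique_partitionable F r'"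
proof -
  assume a: "biclique_partitionable F r" and rr: "r \<le> r'"
  then obtain bs where "length bs \<le> r"
    "\<forall>i<length bs. nonstar_biclique (fst (bs ! i)) (snd (bs ! i))"
    "\<forall>i<length bs. \<forall>j<length bs. i \<noteq> j \<longrightarrow>
        biclique_edges (fst (bs ! i)) (snd (bs ! i)) \<inter> biclique_edges (fst (bs ! j)) (snd (bs ! j)) = {}"
    "(\<Union>i<length bs. biclique_edges (fst (bs ! i)) (snd (bs ! i))) = F"
    unfolding biclique_partitionable_def by blast
  thus ?thesis unfolding biclique_partitionable_def using rr by (intro exI[of _ bs]) auto
qed

lemma bp_zero: "biclique_partitionable F 0 \<Longrightarrow> F = {}"
  unfolding biclique_partitionable_def by auto

definition goodE :: "nat \<Rightarrow> nat set set \<Rightarrow> int \<Rightarrow> bool" where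
  "goodE n E k \<longleftrightarrow> (\<exists>S. independent_set n E S \<and> int (card S) = k - 1) \<and>
        (\<nexists>S. special_subgraph n E S k \<and> induced_edges E S \<noteq> {}) \<and>
        (\<nexists>S. special_subgraph n E S (k + 1))"

definition badE :: "nat \<Rightarrow> nat set set \<Rightarrow> nat \<Rightarrow> bool" where
  "badE n E k \<longleftrightarrow> (\<exists>S. S \<subseteq> {..<n} \<and> card S \<ge> k + 1 \<and>
           biclique_partitionable (induced_edges E S) (card S - k))"

lemma not_good_imp:
  assumes E: "E \<subseteq> all_edges n" and k: "k \<ge> 1" and ng: "\<not> goodE n E (int k)"
  shows "(\<forall>S\<in>Ks n (k-1). E \<inter> De n S \<noteq> {}) \<or> badE n E k"
proof (rule ccontr)
  assume "\<not> ((\<forall>S\<in>Ks n (k-1). E \<inter> De n S \<noteq> {}) \<or> badE n E k)"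
  then obtain S0 where S0: "S0 \<in> Ks n (k-1)" "E \<inter> De n S0 = {}" and nb: "\<not> badE n E k" by auto
  have i1: "\<exists>S. independent_set n E S \<and> int (card S) = int k - 1"
    using S0 k induced_De[OF E, of S0] unfolding independent_set_def Ks_def by (intro exI[of _ S0]) auto
  have i2: "\<nexists>S. special_subgraph n E S (int k) \<and> induced_edges E S \<noteq> {}"
  proof
    assume "\<exists>S. special_subgraph n E S (int k) \<and> induced_edges E S \<noteq> {}"
    then obtain S r where S: "S \<subseteq> {..<n}" "int (card S) = int k + int r"
      "biclique_partitionable (induced_edges E S) r" "induced_edges E S \<noteq> {}"
      unfolding special_subgraph_def by auto
    have r1: "r \<ge> 1" using S(3,4) bp_zero by (cases r) auto
    have "card S = k + r" using S(2) by linarith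
    hence "card S \<ge> k + 1" "card S - k = r" using r1 by auto
    thus False using nb S unfolding badE_def by auto
  qed
  have i3: "\<nexists>S. special_subgraph n E S (int k + 1)"
  proof
    assume "\<exists>S. special_subgraph n E S (int k + 1)"
    then obtain S r where S: "S \<subseteq> {..<n}" "int (card S) = int k + 1 + int r"
      "biclique_partitionable (induced_edges E S) r"
      unfolding special_subgraph_def by auto
    have "card S = k + 1 + r" using S(2) by linarith
    hence "card S \<ge> k + 1" "r \<le> card S - k" by auto
    thus False using nb S bp_mono[OF S(3)] unfolding badE_def by blast
  qed
  show False using ng i1 i2 i3 unfolding goodE_def by blast
qed

definition fS :: "nat \<Rightarrow> real \<Rightarrow> nat \<Rightarrow> real" where
  "fS n p s = real (n choose s) * (1 - p) ^ (s choose 2)"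

lemma fS_upper:
  fixes p :: real assumes p: "0 < p" "p < 1" and m: "m \<ge> 1"
  shows "fS n p m \<le> (real n * exp (- p * (real m - 1) / 2)) ^ m"
proof -
  have c: "real (n choose m) \<le> real n ^ m"
  proof (cases "m \<le> n")
    case True thus ?thesis using binomial_le_pow[OF True] by (simp only: of_nat_le_iff of_nat_power[symmetric])
  next
    case False thus ?thesis by (simp add: binomial_eq_0)
  qed
  have z: "(1 - p) ^ (m choose 2) \<le> exp (- p * (real m - 1) / 2) ^ m"
  proof -
    have "(1 - p) ^ (m choose 2) \<le> exp (-p) ^ (m choose 2)"
      using p exp_ge_add_one_self[of "-p"] by (intro power_mono) auto
    also have "\<dots> = exp (- p * (real m - 1) / 2) ^ m"
      by (simp add: exp_of_nat_mult[symmetric] choose2_real field_simps)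
    finally show ?thesis .
  qed
  have "fS n p m \<le> real n ^ m * exp (- p * (real m - 1) / 2) ^ m"
    unfolding fS_def using c z p by (intro mult_mono) auto
  thus ?thesis by (simp add: power_mult_distrib)
qed

lemma fS_ratio:
  fixes p :: real
  assumes p: "0 < p" "p \<le> 1/2" and k: "k \<ge> 1" and kn: "k + 1 \<le> n" and F1: "fS n p (k+1) \<le> 1"
  shows "fS n p k \<le> fS n p (k-1) * (8 * real k / real n)"
proof -
  define m where "m = k - 1"
  have km: "k = Suc m" unfolding m_def using k by simp
  have n0: "real n > 0" using kn by simp
  have z: "0 < 1 - p" using p by simp
  have c: "real (n choose k) \<le> real (n choose m) * real n / real k"
  proof -
    have "real (n choose k) * real k = real (n choose m) * (real n - real m)"
      using binom_rec[of n m] km by simp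
    also have "\<dots> \<le> real (n choose m) * real n" by (intro mult_left_mono) auto
    finally show ?thesis using k by (simp add: field_simps)
  qed
  have ch: "k choose 2 = (m choose 2) + m"
    using binomial_Suc_Suc[of m 1] km by (simp add: numeral_2_eq_2)
  have D: "(1 - p) ^ k \<le> ((real k + 1) / real n)\<^sup>2"
    using D_bound[of p k n] p kn F1 unfolding fS_def by simp
  have zm: "(1 - p) ^ m \<le> 2 * ((real k + 1) / real n)\<^sup>2"
  proof -
    have "(1 - p) ^ m * (1 - p) = (1 - p) ^ k" using km by simp
    hence "(1 - p) ^ m = (1 - p) ^ k / (1 - p)" using z by (simp add: field_simps)
    also have "\<dots> \<le> ((real k + 1) / real n)\<^sup>2 / (1 - p)" using D z by (intro divide_right_mono) auto
    also have "\<dots> \<le> ((real k + 1) / real n)\<^sup>2 / (1/2)" using p by (intro divide_left_mono) auto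
    finally show ?thesis by simp
  qed
  have kk: "2 * ((real k + 1) / real n)\<^sup>2 * (real n / real k) \<le> 8 * real k / real n"
  proof -
    have k1: "real k \<ge> 1" using k by simp
    have kk1: "real k \<le> real k * real k" using k1 mult_right_mono[of 1 "real k" "real k"] by simp
    have "(real k + 1)\<^sup>2 = real k * real k + 2 * real k + 1" by (simp add: power2_eq_square algebra_simps)
    also have "\<dots> \<le> 4 * (real k * real k)" using k1 kk1 by linarith
    finally have "(real k + 1)\<^sup>2 \<le> 4 * (real k)\<^sup>2" by (simp add: power2_eq_square)
    hence a: "2 * (real k + 1)\<^sup>2 / (real n * real k) \<le> 2 * (4 * (real k)\<^sup>2) / (real n * real k)"
      using n0 k1 by (intro divide_right_mono) auto
    have "2 * ((real k + 1) / real n)\<^sup>2 * (real n / real k) = 2 * (real k + 1)\<^sup>2 / (real n * real k)"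
      using n0 k1 by (simp add: field_simps power2_eq_square)
    also have "\<dots> \<le> 2 * (4 * (real k)\<^sup>2) / (real n * real k)" by (rule a)
    also have "\<dots> = 8 * real k / real n" using n0 k1 by (simp add: field_simps power2_eq_square)
    finally show ?thesis .
  qed
  have "fS n p k = real (n choose k) * ((1 - p) ^ (m choose 2) * (1 - p) ^ m)"
    unfolding fS_def ch by (simp add: power_add)
  also have "\<dots> \<le> (real (n choose m) * real n / real k) * ((1 - p) ^ (m choose 2) * (2 * ((real k + 1) / real n)\<^sup>2))"
    using c zm z by (intro mult_mono mult_left_mono) auto
  also have "\<dots> = fS n p m * (2 * ((real k + 1) / real n)\<^sup>2 * (real n / real k))"
    unfolding fS_def by (simp add: field_simps)
  also have "\<dots> \<le> fS n p m * (8 * real k / real n)"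
    using kk z unfolding fS_def by (intro mult_left_mono) auto
  finally show ?thesis unfolding m_def .
qed

lemma per_n:
  fixes p K T \<eta> \<theta> :: real and n k :: nat
  assumes p: "0 < p" "p \<le> 1/2"
    and k: "1 \<le> k" and K: "real k + 1 \<le> K" "K \<le> real n / 2"
    and F1: "fS n p (k+1) \<le> T" and T1: "T \<le> 1" and F0: "fS n p k > T"
    and G: "T * real n / (8 * K) \<ge> 1"
    and \<eta>: "0 < \<eta>" "\<eta> \<le> 1" and \<theta>: "0 < \<theta>" "\<theta> < 1"
    and hb1: "K\<^sup>2 / (real n / 2) * (exp 1 * real n) powr \<eta> \<le> 1/2"
    and hB2: "2 * exp 1 * (K / real n) powr (1 - \<theta>) \<le> 1"
    and hy: "2 * (2 * exp 1 * (K / real n) powr (1 - \<theta>)) powr \<eta> \<le> 1/2"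
    and hB3: "4 * K\<^sup>2 * (K / real n) powr \<theta> \<le> 1/2"
    and v1: "4 * (2 * p) * sqrt (2 * p) \<le> p"
    and v2: "4 * K * (2 * p) * sqrt (2 * p) \<le> 1"
    and v3: "exp 1 * K / (real n * p\<^sup>2) \<le> 1/4"
  shows "gnp_prob n p (\<lambda>E. goodE n E (int k)) \<ge>
     1 - (2 * (K\<^sup>2 / (real n / 2) * (exp 1 * real n) powr \<eta>)\<^sup>2
        + 4 * (2 * exp 1 * (K / real n) powr (1 - \<theta>)) powr \<eta>
        + 2 / (T * real n / (8 * K)) + 4 * exp 1 * T / p\<^sup>2)"
proof -
  define v where "v = sqrt (p / (1 - p))"
  define q where "q = p / (1 - p)"
  define b1 where "b1 = K\<^sup>2 / (real n / 2) * (exp 1 * real n) powr \<eta>"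
  define B2 where "B2 = 2 * exp 1 * (K / real n) powr (1 - \<theta>)"
  define G' where "G' = T * real n / (8 * K)"
  have n0: "real n > 0" using K by simp
  have Kpos: "K > 0" using K by simp
  have kn: "k + 1 \<le> n" using K by simp
  have q: "p \<le> q" "q \<le> 2 * p" "q \<le> 1" "q > 0" unfolding q_def using p by (auto simp: field_simps)
  have vq: "v = sqrt q" unfolding v_def q_def ..
  have v0: "v > 0" using vq q by simp
  have v1': "v \<le> 1" using vq q by simp
  have v3': "v ^ 3 \<le> 2 * p * sqrt (2 * p)"
  proof -
    have "v ^ 3 = q * sqrt q" unfolding vq using q
      by (simp add: power3_eq_cube)
    also have "\<dots> \<le> 2 * p * sqrt (2 * p)" using q by (intro mult_mono) auto
    finally show ?thesis .
  qed
  have v4: "v ^ 4 \<ge> p\<^sup>2"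
  proof -
    have "v ^ 4 = (v\<^sup>2)\<^sup>2" by simp
    also have "v\<^sup>2 = q" unfolding vq using q by simp
    finally have "v ^ 4 = q\<^sup>2" .
    thus ?thesis using q by (simp add: power_mono)
  qed
  have T0: "T > 0"
  proof -
    have "T * real n / (8 * K) > 0" using G by simp
    thus ?thesis using n0 Kpos by (simp add: zero_less_divide_iff zero_less_mult_iff)
  qed
  have "gnp_prob n p (\<lambda>E. \<not> goodE n E (int k)) \<le>
        gnp_prob n p (\<lambda>E. (\<forall>S\<in>Ks n (k-1). E \<inter> De n S \<noteq> {}) \<or> badE n E k)"
    using p not_good_imp[OF _ k] by (intro gnp_prob_mono) auto
  also have "\<dots> \<le> gnp_prob n p (\<lambda>E. \<forall>S\<in>Ks n (k-1). E \<inter> De n S \<noteq> {}) + gnp_prob n p (\<lambda>E. badE n E k)"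
    using p by (intro gnp_prob_disj) auto
  also have "gnp_prob n p (\<lambda>E. \<forall>S\<in>Ks n (k-1). E \<inter> De n S \<noteq> {}) \<le> 2 * b1\<^sup>2 + 4 * B2 powr \<eta> + 2 / G'"
  proof -
    have "gnp_prob n p (\<lambda>E. \<forall>S\<in>Ks n (k-1). E \<inter> De n S \<noteq> {}) \<le>
      (\<Sum>i\<in>{2..k-1}. real ((k-1) choose i) * real ((n - (k-1)) choose ((k-1) - i)) / real (n choose (k-1)) * wt p i)"
      using no_indep_bound[of p "k-1" n] p kn by simp
    also have "\<dots> \<le> 2 * b1\<^sup>2 + 4 * B2 powr \<eta> + 2 / G'"
    proof (cases "k \<ge> 3")
      case False
      hence "{2..k-1} = {}" by auto
      thus ?thesis using T0 n0 Kpos unfolding G'_def by simp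
    next
      case True
      have fk: "fS n p k \<le> fS n p (k-1) * (8 * real k / real n)"
        using fS_ratio[OF p k kn] F1 T1 by simp
      have Fs: "fS n p (k-1) \<ge> G'"
      proof -
        have "T < fS n p (k-1) * (8 * real k / real n)" using F0 fk by simp
        hence "T * real n / (8 * real k) < fS n p (k-1)" using n0 k by (simp add: field_simps)
        moreover have "T * real n / (8 * K) \<le> T * real n / (8 * real k)"
          using T0 n0 K k by (intro divide_left_mono) auto
        ultimately show ?thesis unfolding G'_def by simp
      qed
      have Fs1: "fS n p (k-1) \<ge> 1" using Fs G unfolding G'_def by simp
      have sb: "(\<Sum>i\<in>{2..k-1}. real ((k-1) choose i) * real ((n - (k-1)) choose ((k-1) - i)) / real (n choose (k-1)) * wt p i)
        \<le> 2 * b1\<^sup>2 + 4 * B2 powr \<eta> + 2 / fS n p (k-1)"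
        unfolding b1_def B2_def fS_def
        by (rule good_sum[OF p True kn _ _ K \<eta> \<theta> hb1 hB2 hy hB3])
           (use F1 T1 Fs1 in \<open>auto simp: fS_def\<close>)
      have G'0: "G' > 0" using G unfolding G'_def by simp
      have "0 < fS n p (k-1) * G'" using G'0 Fs by simp
      hence "2 / fS n p (k-1) \<le> 2 / G'" using Fs by (intro divide_left_mono) auto
      thus ?thesis using sb by linarith
    qed
    finally show ?thesis .
  qed
  also have "gnp_prob n p (\<lambda>E. badE n E k) \<le> 4 * exp 1 * T / p\<^sup>2"
  proof -
    have "gnp_prob n p (\<lambda>E. badE n E k) \<le>
      (\<Sum>m\<in>{k+1..n}. real (n choose m) * ((1 - p) ^ (m choose 2) * (real (m - k) + 1) *
         ((1 + v^3) ^ (2 * m) / v ^ 4) ^ (m - k)))"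
      unfolding badE_def by (rule prob_bad) (use p v_def v1' in auto)
    also have "\<dots> \<le> 4 * exp 1 * fS n p (k+1) / v^4"
      unfolding fS_def
    proof (rule bad_analytic[OF p v_def kn])
      show "real (n choose (k + 1)) * (1 - p) ^ (k + 1 choose 2) \<le> 1" using F1 T1 unfolding fS_def by simp
      show "4 * v ^ 3 \<le> p" using v3' v1 by simp
      have "4 * real k * v ^ 3 \<le> 4 * K * (2 * p * sqrt (2 * p))"
        using K v3' v0 by (intro mult_mono) auto
      thus "4 * real k * v ^ 3 \<le> 1" using v2 by (simp add: mult.assoc)
      have "exp 1 * (real k + 1) / (real n * v ^ 4) \<le> exp 1 * K / (real n * p\<^sup>2)"
        using K v4 n0 p by (intro frac_le mult_left_mono) auto
      thus "exp 1 * (real k + 1) / (real n * v ^ 4) \<le> 1 / 4" using v3 by linarith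
    qed
    also have "\<dots> \<le> 4 * exp 1 * T / p\<^sup>2"
      using F1 v4 p T0 by (intro frac_le) (auto simp: fS_def)
    finally show ?thesis .
  qed
  finally have ng: "gnp_prob n p (\<lambda>E. \<not> goodE n E (int k)) \<le> 2 * b1\<^sup>2 + 4 * B2 powr \<eta> + 2 / G' + 4 * exp 1 * T / p\<^sup>2"
    by simp
  have "gnp_prob n p (\<lambda>E. goodE n E (int k)) = 1 - gnp_prob n p (\<lambda>E. \<not> goodE n E (int k))"
    using gnp_prob_compl[of n p "\<lambda>E. \<not> goodE n E (int k)"] by simp
  thus ?thesis using ng unfolding b1_def B2_def G'_def by simp
qed

lemma as1: "(\<gamma>::real) < 0 \<Longrightarrow> eventually (\<lambda>n::nat. real n powr \<gamma> \<le> 1/2) sequentially"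
  by real_asymp
lemma as3: "(\<gamma>::real) < 0 \<Longrightarrow> \<beta> + \<gamma> > 0 \<Longrightarrow> c > 0 \<Longrightarrow>
  eventually (\<lambda>n::nat. real n * exp (-(real n powr \<gamma> * real n powr \<beta>) / 2) \<le> real n powr (-c)) sequentially"
  by real_asymp
lemma as4: "(c::real) > 0 \<Longrightarrow> eventually (\<lambda>n::nat. real n powr (-c) \<le> 1) sequentially"
  by real_asymp
lemma as5: "(\<beta>::real) < 1 \<Longrightarrow> eventually (\<lambda>n::nat. 3 * real n powr \<beta> \<le> real n / 2) sequentially"
  by real_asymp
lemma as6: "(\<beta>::real) > 0 \<Longrightarrow> eventually (\<lambda>n::nat. 1 \<le> real n powr \<beta>) sequentially"
  by real_asymp
lemma as7: "1 - c - \<beta> > (0::real) \<Longrightarrow>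
  filterlim (\<lambda>n::nat. real n powr (-c) * real n / (8 * (3 * real n powr \<beta>))) at_top sequentially"
  by real_asymp
lemma as8: "2 * \<beta> + \<eta> < (1::real) \<Longrightarrow>
  ((\<lambda>n::nat. (3 * real n powr \<beta>)\<^sup>2 / (real n / 2) * (exp 1 * real n) powr \<eta>) \<longlonglongrightarrow> 0)"
  by real_asymp
lemma as8b: "2 * \<beta> + \<eta> < (1::real) \<Longrightarrow>
  ((\<lambda>n::nat. 2 * ((3 * real n powr \<beta>)\<^sup>2 / (real n / 2) * (exp 1 * real n) powr \<eta>)\<^sup>2) \<longlonglongrightarrow> 0)"
  by real_asymp
lemma as16: "1 - c - \<beta> > (0::real) \<Longrightarrow>
  ((\<lambda>n::nat. 2 / (real n powr (-c) * real n / (8 * (3 * real n powr \<beta>)))) \<longlonglongrightarrow> 0)"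
  by real_asymp
lemma as7e: "1 - c - \<beta> > (0::real) \<Longrightarrow>
  eventually (\<lambda>n::nat. 1 \<le> real n powr (-c) * real n / (8 * (3 * real n powr \<beta>))) sequentially"
  by real_asymp
lemma as9: "(a::real) < 0 \<Longrightarrow> C > 0 \<Longrightarrow> ((\<lambda>n::nat. C * real n powr a) \<longlonglongrightarrow> 0)"
  by real_asymp
lemma as12: "(\<gamma>::real) < 0 \<Longrightarrow>
  eventually (\<lambda>n::nat. 4 * (2 * real n powr \<gamma>) * sqrt (2 * real n powr \<gamma>) \<le> real n powr \<gamma>) sequentially"
  by real_asymp
lemma as13: "(\<gamma>::real) < 0 \<Longrightarrow> \<beta> + 3/2 * \<gamma> < 0 \<Longrightarrow>
  eventually (\<lambda>n::nat. 4 * (3 * real n powr \<beta>) * (2 * real n powr \<gamma>) * sqrt (2 * real n powr \<gamma>) \<le> 1) sequentially"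
  by real_asymp
lemma as14: "(\<gamma>::real) < 0 \<Longrightarrow> \<beta> - 1 - 2 * \<gamma> < 0 \<Longrightarrow>
  eventually (\<lambda>n::nat. exp 1 * (3 * real n powr \<beta>) / (real n * (real n powr \<gamma>)\<^sup>2) \<le> 1/4) sequentially"
  by real_asymp
lemma as15: "c + 2 * \<gamma> > (0::real) \<Longrightarrow>
  ((\<lambda>n::nat. 4 * exp 1 * real n powr (-c) / (real n powr \<gamma>)\<^sup>2) \<longlonglongrightarrow> 0)"
  by real_asymp

lemma Kn_powr:
  fixes x :: real assumes "x > 0"
  shows "((3 * x powr \<beta>) / x) powr a = 3 powr a * x powr ((\<beta> - 1) * a)"
proof -
  have "(3 * x powr \<beta>) / x = 3 * x powr (\<beta> - 1)"
    using assms by (simp add: powr_diff)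
  thus ?thesis using assms by (simp add: powr_mult powr_powr)
qed

lemma param_facts:
  fixes \<gamma> :: real
  assumes "-1/3 < \<gamma>" "\<gamma> < 0"
  defines "g \<equiv> - \<gamma>"
  defines "\<beta> \<equiv> g + g * (1 - 3 * g) / 4"
  defines "\<theta> \<equiv> (1 + \<beta>) / (2 * (1 - \<beta>))"
  defines "\<eta> \<equiv> (1 - 2 * \<beta>) / 2"
  defines "c \<equiv> (2 * g + 1 - \<beta>) / 2"
  shows "\<beta> + \<gamma> > 0" "\<beta> > 0" "\<beta> < 1" "0 < \<theta>" "\<theta> < 1" "0 < \<eta>" "\<eta> \<le> 1"
    "2 * \<beta> + \<eta> < 1" "c > 0" "c + 2 * \<gamma> > 0" "1 - c - \<beta> > 0" "\<beta> + 3/2 * \<gamma> < 0"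
    "\<beta> - 1 - 2 * \<gamma> < 0" "(\<beta> - 1) * (1 - \<theta>) < 0" "(\<beta> - 1) * (1 - \<theta>) * \<eta> < 0"
    "2 * \<beta> + (\<beta> - 1) * \<theta> < 0"
proof -
  have g: "0 < g" "g < 1/3" unfolding g_def using assms by auto
  have d: "0 < g * (1 - 3 * g)" using g by simp
  have gg: "0 \<le> g * g" by simp
  have ge: "g * (1 - 3 * g) = g - 3 * (g * g)" by (simp add: algebra_simps)
  have d2: "g * (1 - 3 * g) < 2 * g" unfolding ge using g gg by (simp add: field_simps; linarith)
  have b1: "\<beta> < 1/3"
  proof -
    have "0 < (1 - 3 * g) * (4 - 3 * g)" using g by simp
    thus ?thesis unfolding \<beta>_def by (simp add: field_simps)
  qed
  have bg: "\<beta> > g" unfolding \<beta>_def using d by simp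
  have bg2: "\<beta> < 3/2 * g" unfolding \<beta>_def using d2 by simp
  show bpos: "\<beta> + \<gamma> > 0" using bg g_def by simp
  show "\<beta> > 0" using bg g by simp
  show "\<beta> < 1" using b1 by simp
  have omb: "1 - \<beta> > 0" using b1 by simp
  show "0 < \<theta>" unfolding \<theta>_def using omb bg g by simp
  have th1: "\<theta> < 1" unfolding \<theta>_def using omb b1 by (simp add: field_simps)
  show "\<theta> < 1" by (rule th1)
  show "0 < \<eta>" unfolding \<eta>_def using b1 by (simp add: field_simps; linarith)
  show "\<eta> \<le> 1" unfolding \<eta>_def using bg g by (simp add: field_simps; linarith)
  show "2 * \<beta> + \<eta> < 1" unfolding \<eta>_def using b1 by (simp add: field_simps; linarith)
  show "c > 0" unfolding c_def using b1 g by (simp add: field_simps; linarith)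
  show "c + 2 * \<gamma> > 0" unfolding c_def using b1 g g_def by (simp add: field_simps; linarith)
  show "1 - c - \<beta> > 0" unfolding c_def using b1 g by (simp add: field_simps; linarith)
  show "\<beta> + 3/2 * \<gamma> < 0" using bg2 g_def by (simp add: field_simps; linarith)
  show "\<beta> - 1 - 2 * \<gamma> < 0" using b1 g g_def by (simp add: field_simps; linarith)
  have a2: "(\<beta> - 1) * (1 - \<theta>) < 0" using omb th1 by (simp add: mult_neg_pos)
  show "(\<beta> - 1) * (1 - \<theta>) < 0" by (rule a2)
  have "\<eta> > 0" unfolding \<eta>_def using b1 by (simp add: field_simps; linarith)
  thus "(\<beta> - 1) * (1 - \<theta>) * \<eta> < 0" using a2 by (simp add: mult_neg_pos)
  have "(\<beta> - 1) * \<theta> = - (1 + \<beta>) / 2" unfolding \<theta>_def using omb by (simp add: field_simps)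
  thus "2 * \<beta> + (\<beta> - 1) * \<theta> < 0" using b1 by (simp add: field_simps; linarith)
qed

theorem mainTheorem8:
  fixes \<gamma> :: real
  assumes "-1/3 < \<gamma>" and "\<gamma> < 0"
  shows "\<exists>k :: nat \<Rightarrow> int.
    (\<lambda>n. gnp_prob n (real n powr \<gamma>) (\<lambda>E.
        (\<exists>S. independent_set n E S \<and> int (card S) = k n - 1) \<and>
        (\<nexists>S. special_subgraph n E S (k n) \<and> induced_edges E S \<noteq> {}) \<and>
        (\<nexists>S. special_subgraph n E S (k n + 1))))
    \<longlonglongrightarrow> 1"
proof -
  define g where "g = - \<gamma>"
  define \<beta> where "\<beta> = g + g * (1 - 3 * g) / 4"
  define \<theta> where "\<theta> = (1 + \<beta>) / (2 * (1 - \<beta>))"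
  define \<eta> where "\<eta> = (1 - 2 * \<beta>) / 2"
  define c where "c = (2 * g + 1 - \<beta>) / 2"
  note pf = param_facts[OF assms, folded g_def, folded \<beta>_def, folded \<theta>_def \<eta>_def c_def]
  define a2 where "a2 = (\<beta> - 1) * (1 - \<theta>)"
  define a3 where "a3 = a2 * \<eta>"
  define a4 where "a4 = 2 * \<beta> + (\<beta> - 1) * \<theta>"
  have a2n: "a2 < 0" and a3n: "a3 < 0" and a4n: "a4 < 0" unfolding a2_def a3_def a4_def using pf by auto
  define p where "p = (\<lambda>n::nat. real n powr \<gamma>)"
  define T where "T = (\<lambda>n::nat. real n powr (-c))"
  define K where "K = (\<lambda>n::nat. 3 * real n powr \<beta>)"
  define kk where "kk = (\<lambda>n. LEAST s. fS n (p n) (s+1) \<le> T n)"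
  define C2 where "C2 = 2 * exp 1 * 3 powr (1 - \<theta>)"
  define bound where "bound = (\<lambda>n::nat. 2 * ((K n)\<^sup>2 / (real n / 2) * (exp 1 * real n) powr \<eta>)\<^sup>2
        + 4 * (C2 powr \<eta> * real n powr a3)
        + 2 / (T n * real n / (8 * K n)) + 4 * exp 1 * T n / (p n)\<^sup>2)"
  have C2pos: "C2 > 0" unfolding C2_def by simp
  have idB2: "2 * exp 1 * (K n / real n) powr (1 - \<theta>) = C2 * real n powr a2" if "n > 0" for n
    unfolding K_def C2_def a2_def using Kn_powr[of "real n" \<beta> "1 - \<theta>"] that by simp
  have idy: "(2 * exp 1 * (K n / real n) powr (1 - \<theta>)) powr \<eta> = C2 powr \<eta> * real n powr a3" if "n > 0" for n
    unfolding idB2[OF that] a3_def using C2pos that by (simp add: powr_mult powr_powr)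
  have idB3: "4 * (K n)\<^sup>2 * (K n / real n) powr \<theta> = 36 * 3 powr \<theta> * real n powr a4" if "n > 0" for n
  proof -
    have "(K n)\<^sup>2 = 9 * real n powr (2 * \<beta>)" unfolding K_def using that
      by (simp add: power2_eq_square powr_add[symmetric])
    moreover have "(K n / real n) powr \<theta> = 3 powr \<theta> * real n powr ((\<beta> - 1) * \<theta>)"
      unfolding K_def using Kn_powr[of "real n" \<beta> \<theta>] that by simp
    ultimately show ?thesis unfolding a4_def using that by (simp add: powr_add)
  qed
  have ev: "eventually (\<lambda>n. 1 - bound n \<le> gnp_prob n (p n) (\<lambda>E. goodE n E (int (kk n)))) sequentially"
  proof -
    have E1: "eventually (\<lambda>n. p n \<le> 1/2) sequentially" unfolding p_def using as1 assms by simp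
    have E2: "eventually (\<lambda>n::nat. n \<ge> 2) sequentially" by (rule eventually_ge_at_top)
    have E3: "eventually (\<lambda>n. real n * exp (-(p n * real n powr \<beta>) / 2) \<le> T n) sequentially"
      unfolding p_def T_def using as3[of \<gamma> \<beta> c] assms pf by simp
    have E4: "eventually (\<lambda>n. T n \<le> 1) sequentially" unfolding T_def using as4 pf by simp
    have E5: "eventually (\<lambda>n. K n \<le> real n / 2) sequentially" unfolding K_def using as5 pf by simp
    have E6: "eventually (\<lambda>n::nat. 1 \<le> real n powr \<beta>) sequentially" using as6 pf by simp
    have E7: "eventually (\<lambda>n. 1 \<le> T n * real n / (8 * K n)) sequentially"
      using as7e[of c \<beta>] pf unfolding T_def K_def by simp
    have E8: "eventually (\<lambda>n. (K n)\<^sup>2 / (real n / 2) * (exp 1 * real n) powr \<eta> \<le> 1/2) sequentially"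
      using order_tendstoD(2)[OF as8[of \<beta> \<eta>], of "1/2"] pf unfolding K_def
      by (auto elim: eventually_mono)
    have E9: "eventually (\<lambda>n. C2 * real n powr a2 \<le> 1) sequentially"
      using order_tendstoD(2)[OF as9[OF a2n C2pos], of 1] by (auto elim: eventually_mono)
    have E10: "eventually (\<lambda>n. 2 * (C2 powr \<eta> * real n powr a3) \<le> 1/2) sequentially"
      using order_tendstoD(2)[OF as9[OF a3n, of "2 * C2 powr \<eta>"], of "1/2"] C2pos
      by (auto elim: eventually_mono simp: mult.assoc)
    have E11: "eventually (\<lambda>n. 36 * 3 powr \<theta> * real n powr a4 \<le> 1/2) sequentially"
      using order_tendstoD(2)[OF as9[OF a4n, of "36 * 3 powr \<theta>"], of "1/2"]
      by (auto elim: eventually_mono)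
    have E12: "eventually (\<lambda>n. 4 * (2 * p n) * sqrt (2 * p n) \<le> p n) sequentially"
      unfolding p_def using as12 assms by simp
    have E13: "eventually (\<lambda>n. 4 * K n * (2 * p n) * sqrt (2 * p n) \<le> 1) sequentially"
      unfolding p_def K_def using as13[of \<gamma> \<beta>] assms pf by simp
    have E14: "eventually (\<lambda>n. exp 1 * K n / (real n * (p n)\<^sup>2) \<le> 1/4) sequentially"
      unfolding p_def K_def using as14[of \<gamma> \<beta>] assms pf by simp
    show ?thesis
    proof (rule eventually_mono[OF eventually_conj[OF E1 eventually_conj[OF E2 eventually_conj[OF E3
          eventually_conj[OF E4 eventually_conj[OF E5 eventually_conj[OF E6 eventually_conj[OF E7
          eventually_conj[OF E8 eventually_conj[OF E9 eventually_conj[OF E10 eventually_conj[OF E11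
          eventually_conj[OF E12 eventually_conj[OF E13 E14]]]]]]]]]]]]]])
      fix n assume H: "p n \<le> 1/2 \<and> n \<ge> 2 \<and> real n * exp (-(p n * real n powr \<beta>) / 2) \<le> T n \<and>
        T n \<le> 1 \<and> K n \<le> real n / 2 \<and> 1 \<le> real n powr \<beta> \<and> 1 \<le> T n * real n / (8 * K n) \<and>
        (K n)\<^sup>2 / (real n / 2) * (exp 1 * real n) powr \<eta> \<le> 1/2 \<and> C2 * real n powr a2 \<le> 1 \<and>
        2 * (C2 powr \<eta> * real n powr a3) \<le> 1/2 \<and> 36 * 3 powr \<theta> * real n powr a4 \<le> 1/2 \<and>
        4 * (2 * p n) * sqrt (2 * p n) \<le> p n \<and> 4 * K n * (2 * p n) * sqrt (2 * p n) \<le> 1 \<and>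
        exp 1 * K n / (real n * (p n)\<^sup>2) \<le> 1/4"
      have n2: "n \<ge> 2" using H by simp
      have n0: "n > 0" using n2 by simp
      have pp: "0 < p n" "p n \<le> 1/2" using H n0 unfolding p_def by auto
      define s0 where "s0 = nat \<lceil>real n powr \<beta>\<rceil>"
      have ce: "real s0 = real_of_int \<lceil>real n powr \<beta>\<rceil>" unfolding s0_def
        by (simp add: of_nat_nat)
      have s0: "real s0 \<ge> real n powr \<beta>" "real s0 \<le> real n powr \<beta> + 1"
        unfolding ce using le_of_int_ceiling[of "real n powr \<beta>"] of_int_ceiling_le_add_one[of "real n powr \<beta>"] by auto
      have Ps0: "fS n (p n) (s0 + 1) \<le> T n"
      proof -
        define x where "x = real n * exp (- p n * (real (s0 + 1) - 1) / 2)"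
        have fx: "fS n (p n) (s0+1) \<le> x ^ (s0 + 1)" unfolding x_def using fS_upper[of "p n" "s0+1" n] pp by simp
        have "x \<le> real n * exp (-(p n * real n powr \<beta>) / 2)"
          unfolding x_def using s0 pp by (intro mult_left_mono) (auto simp: mult_left_mono)
        hence xT: "x \<le> T n" using H by linarith
        have x0: "x \<ge> 0" unfolding x_def by simp
        have x1: "x \<le> 1" using xT H by linarith
        have "x ^ (s0 + 1) \<le> x" using x0 x1 by (simp add: power_le_one mult_left_le)
        thus ?thesis using fx xT by linarith
      qed
      have kk_le: "kk n \<le> s0" unfolding kk_def by (rule Least_le) (rule Ps0)
      have F1: "fS n (p n) (kk n + 1) \<le> T n" unfolding kk_def by (rule LeastI[of _ s0]) (rule Ps0)
      have kk1: "kk n \<ge> 1"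
      proof (rule ccontr)
        assume "\<not> kk n \<ge> 1"
        hence "kk n = 0" by simp
        hence "fS n (p n) 1 \<le> T n" using F1 by simp
        moreover have "fS n (p n) 1 = real n" unfolding fS_def by (simp add: numeral_2_eq_2)
        ultimately show False using H n2 by simp
      qed
      have F0: "fS n (p n) (kk n) > T n"
      proof -
        have "\<not> fS n (p n) ((kk n - 1) + 1) \<le> T n"
          unfolding kk_def by (rule not_less_Least) (use kk1 in \<open>simp add: kk_def\<close>)
        thus ?thesis using kk1 by simp
      qed
      have Kk: "real (kk n) + 1 \<le> K n"
      proof -
        have "real (kk n) \<le> real s0" using kk_le by simp
        thus ?thesis unfolding K_def using s0 H by linarith
      qed
      have "gnp_prob n (p n) (\<lambda>E. goodE n E (int (kk n))) \<ge>
         1 - (2 * ((K n)\<^sup>2 / (real n / 2) * (exp 1 * real n) powr \<eta>)\<^sup>2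
        + 4 * (2 * exp 1 * (K n / real n) powr (1 - \<theta>)) powr \<eta>
        + 2 / (T n * real n / (8 * K n)) + 4 * exp 1 * T n / (p n)\<^sup>2)"
      proof (rule per_n[OF pp kk1 Kk _ F1 _ F0])
        show "K n \<le> real n / 2" "T n \<le> 1" "1 \<le> T n * real n / (8 * K n)" using H by auto
        show "0 < \<eta>" "\<eta> \<le> 1" "0 < \<theta>" "\<theta> < 1" using pf by auto
        show "(K n)\<^sup>2 / (real n / 2) * (exp 1 * real n) powr \<eta> \<le> 1 / 2" using H by simp
        have "C2 * real n powr a2 \<le> 1" using H by blast
        thus "2 * exp 1 * (K n / real n) powr (1 - \<theta>) \<le> 1" using idB2[OF n0] by linarith
        have "2 * (C2 powr \<eta> * real n powr a3) \<le> 1/2" using H by blast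
        thus "2 * (2 * exp 1 * (K n / real n) powr (1 - \<theta>)) powr \<eta> \<le> 1 / 2" using idy[OF n0] by linarith
        have "36 * 3 powr \<theta> * real n powr a4 \<le> 1/2" using H by blast
        thus "4 * (K n)\<^sup>2 * (K n / real n) powr \<theta> \<le> 1 / 2" using idB3[OF n0] by linarith
        show "4 * (2 * p n) * sqrt (2 * p n) \<le> p n" "4 * K n * (2 * p n) * sqrt (2 * p n) \<le> 1"
          "exp 1 * K n / (real n * (p n)\<^sup>2) \<le> 1 / 4" using H by auto
      qed
      thus "1 - bound n \<le> gnp_prob n (p n) (\<lambda>E. goodE n E (int (kk n)))"
        unfolding bound_def using idy[OF n0] by simp
    qed
  qed
  have ev2: "eventually (\<lambda>n. gnp_prob n (p n) (\<lambda>E. goodE n E (int (kk n))) \<le> 1) sequentially"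
  proof (rule eventually_mono[OF eventually_ge_at_top[of 1]])
    fix n :: nat assume n: "n \<ge> 1"
    have "real n powr \<gamma> \<le> real n powr 0" using n assms by (intro powr_mono) auto
    hence p01: "0 \<le> p n" "p n \<le> 1" unfolding p_def using n by auto
    have "gnp_prob n (p n) (\<lambda>E. goodE n E (int (kk n))) \<le> gnp_prob n (p n) (\<lambda>E. True)"
      using p01 by (intro gnp_prob_mono) auto
    thus "gnp_prob n (p n) (\<lambda>E. goodE n E (int (kk n))) \<le> 1" using gnp_prob_True by simp
  qed
  have bound0: "bound \<longlonglongrightarrow> 0"
  proof -
    have t1: "(\<lambda>n::nat. 2 * ((K n)\<^sup>2 / (real n / 2) * (exp 1 * real n) powr \<eta>)\<^sup>2) \<longlonglongrightarrow> 0"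
      unfolding K_def using as8b[of \<beta> \<eta>] pf by simp
    have t2: "(\<lambda>n::nat. 4 * (C2 powr \<eta> * real n powr a3)) \<longlonglongrightarrow> 0"
      using as9[OF a3n, of "4 * C2 powr \<eta>"] C2pos by (simp add: mult.assoc)
    have t3: "(\<lambda>n::nat. 2 / (T n * real n / (8 * K n))) \<longlonglongrightarrow> 0"
      unfolding T_def K_def using as16[of c \<beta>] pf by simp
    have t4: "(\<lambda>n::nat. 4 * exp 1 * T n / (p n)\<^sup>2) \<longlonglongrightarrow> 0"
      unfolding T_def p_def using as15[of c \<gamma>] pf by simp
    have "(\<lambda>n. 2 * ((K n)\<^sup>2 / (real n / 2) * (exp 1 * real n) powr \<eta>)\<^sup>2
        + 4 * (C2 powr \<eta> * real n powr a3)
        + 2 / (T n * real n / (8 * K n)) + 4 * exp 1 * T n / (p n)\<^sup>2) \<longlonglongrightarrow> 0 + 0 + 0 + 0"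
      by (intro tendsto_add t1 t2 t3 t4)
    thus ?thesis unfolding bound_def by simp
  qed
  have lim: "(\<lambda>n. gnp_prob n (p n) (\<lambda>E. goodE n E (int (kk n)))) \<longlonglongrightarrow> 1"
  proof (rule tendsto_sandwich[OF ev ev2])
    show "(\<lambda>n. 1 - bound n) \<longlonglongrightarrow> 1" using tendsto_diff[OF tendsto_const bound0, of 1] by simp
  qed simp
  show ?thesis
    by (rule exI[of _ "\<lambda>n. int (kk n)"]) (use lim in \<open>simp add: p_def goodE_def\<close>)
qed

end
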